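(* Let $A(B)$ be a first-order formula, where $B$ is a subformula occurrence in the context $A(\circ)$ and no quantifier of the context $A$ binds a variable of $B$. Let $sk(B)$ be obtained by skolemizing all strong quantifier occurrences of $B$ (with polarity taken in $A(B)$). Then: (1) If $\models_1 A(B)$, then $\models_1 A(sk(B))$. (2) There are Skolem axioms $S_1,\dots,S_k$ (for the Skolem functions introduced) such that if $S_1,\dots,S_k\models_1 A(sk(B))$, then $S_1,\dots,S_k\models_1 A(B)$. (3) If $S_1,\dots,S_k$ are Skolem axioms, $A$ is a formula containing none of their Skolem functions, and $S_1,\dots,S_k\models_1 A$, then $\models_1 A$.
   Context: The propositional setting is as follows. - A lattice-oriented signature $\mathcal{L}$ is a finite set of connectives. Each connective $c$ has an arity $n_c$ and a polarity $p_c:\{1,\dots,n_c\}\to\{-,+\}$. It includes binary $\lor,\land,\to$ with $p_\lor\equiv p_\land\equiv +$, $p_\to(1)=-$ and $p_\to(2)=+$. - A finite $\mathcal{L}$-lattice $\mathbf{A}$ is a finite set $L$ with operations $c^L$ such that $(L,\lor^L,\land^L)$ is a lattice with order $\le$ and top $1$. Each $c^L$ is monotone in the arguments with polarity $+$ and antitone in those with polarity $-$. Moreover $1\le a\to b$ iff $a\le b$. The first-order setting is as follows. - Fix a finite $\mathcal{L}$-lattice $\mathbf{A}$ and a predicate language with predicate and function symbols of given arities. - Terms and formulas are built as usual from object variables using the connectives of $\mathcal{L}$ and the quantifiers $\forall,\exists$. - A structure consists of a nonempty set $S$, maps $P^S:S^n\to L$ for the $n$-ary predicate symbols, and maps $f^S:S^n\to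 S$ for the $n$-ary function symbols. - An evaluation $v$ maps variables to $S$. Formulas get values in $L$: connectives are interpreted by $c^L$; $\|\forall x\varphi\|_v=\bigwedge_{a\in S}\|\varphi\|_{v[x\to a]}$ and $\|\exists x\varphi\|_v=\bigvee_{a\in S}\|\varphi\|_{v[x\to a]}$. - $\models_1 C$ means $\|C\|_v=1$ for every structure and every evaluation $v$. - $C_1,\dots,C_n\models_1 C'$ means $\models_1\forall\bar x(\bigwedge_i C_i\to C')$, where $\bar x$ are the free variables. - An occurrence in a formula is positive or negative: the whole formula is positive, and going into argument $i$ of a connective $c$ keeps the polarity if $p_c(i)=+$ and flips it if $p_c(i)=-$. Quantifiers do not change polarity. - Strong quantifier occurrences are positive occurrences of $\forall$ and negative occurrences of $\exists$. Weak quantifier occurrences are positive occurrences of $\exists$ and negative occurrences of $\forall$. Skolemization uses $|W|=|L|$, the number of truth values. Each strong occurrence $\exists x\,C(x)$ in $B$ is replaced by $\bigvee_{i=1}^{|W|}C(f_i(\bar x))$, and each strong occurrence $\forall x\,C(x)$ by $\bigwedge_{i=1}^{|W|}C(f_i(\bar x))$. Here the $f_i$ are new function symbols (Skolem functions) and $\bar x$ are the variables of the weak quantifiers in whose scope the occurrence lies. Skolem axioms are the closed sentences $\forall\bar x\,(\exists y\,A(y,\bar x)\to\bigvee_{i=1}^{|W|}A(f_i(\bar x),\bar x))$ and $\forall\bar x\,(\bigwedge_{i=1}^{|W|}A(f_i(\bar x),\bar x)\to\forall y\,A(y,\bar x))$, with new function symbols $f_i$. *)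

theory Defs
  imports Main
begin

datatype 'f trm = Var nat | Fn 'f "'f trm list"

text \<open>Formulas over a lattice-oriented signature: the binary connectives
  Or, And, Imp are always present; further connectives of type 'c have an arity
  and a polarity given separately.\<close>
datatype ('c, 'p, 'f) fm =
    Atom 'p "'f trm list"
  | Or "('c, 'p, 'f) fm" "('c, 'p, 'f) fm"
  | And "('c, 'p, 'f) fm" "('c, 'p, 'f) fm"
  | Imp "('c, 'p, 'f) fm" "('c, 'p, 'f) fm"
  | Conn 'c "('c, 'p, 'f) fm list"
  | All nat "('c, 'p, 'f) fm"
  | Ex nat "('c, 'p, 'f) fm"

fun fvt :: "'f trm \<Rightarrow> nat set" where
  "fvt (Var x) = {x}"
| "fvt (Fn f ts) = (\<Union>t\<in>set ts. fvt t)"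

fun fv :: "('c, 'p, 'f) fm \<Rightarrow> nat set" where
  "fv (Atom p ts) = (\<Union>t\<in>set ts. fvt t)"
| "fv (Or a b) = fv a \<union> fv b"
| "fv (And a b) = fv a \<union> fv b"
| "fv (Imp a b) = fv a \<union> fv b"
| "fv (Conn c as) = (\<Union>a\<in>set as. fv a)"
| "fv (All x a) = fv a - {x}"
| "fv (Ex x a) = fv a - {x}"

fun funst :: "'f trm \<Rightarrow> 'f set" where
  "funst (Var x) = {}"
| "funst (Fn f ts) = insert f (\<Union>t\<in>set ts. funst t)"

fun funs :: "('c, 'p, 'f) fm \<Rightarrow> 'f set" where
  "funs (Atom p ts) = (\<Union>t\<in>set ts. funst t)"
| "funs (Or a b) = funs a \<union> funs b"
| "funs (And a b) = funs a \<union> funs b"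
| "funs (Imp a b) = funs a \<union> funs b"
| "funs (Conn c as) = (\<Union>a\<in>set as. funs a)"
| "funs (All x a) = funs a"
| "funs (Ex x a) = funs a"

fun wf :: "('c \<Rightarrow> nat) \<Rightarrow> ('c, 'p, 'f) fm \<Rightarrow> bool" where
  "wf ar (Atom p ts) = True"
| "wf ar (Or a b) = (wf ar a \<and> wf ar b)"
| "wf ar (And a b) = (wf ar a \<and> wf ar b)"
| "wf ar (Imp a b) = (wf ar a \<and> wf ar b)"
| "wf ar (Conn c as) = (length as = ar c \<and> list_all (wf ar) as)"
| "wf ar (All x a) = wf ar a"
| "wf ar (Ex x a) = wf ar a"

text \<open>Capture-avoiding simultaneous substitution (bound variables are renamed
  only when a capture would otherwise occur).\<close>
fun substt :: "(nat \<Rightarrow> 'f trm) \<Rightarrow> 'f trm \<Rightarrow> 'f trm" where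
  "substt s (Var x) = s x"
| "substt s (Fn f ts) = Fn f (map (substt s) ts)"

definition fresh_var :: "nat set \<Rightarrow> nat \<Rightarrow> nat" where
  "fresh_var S y = (if y \<notin> S then y else Suc (Max S))"

fun subst :: "(nat \<Rightarrow> 'f trm) \<Rightarrow> ('c, 'p, 'f) fm \<Rightarrow> ('c, 'p, 'f) fm" where
  "subst s (Atom p ts) = Atom p (map (substt s) ts)"
| "subst s (Or a b) = Or (subst s a) (subst s b)"
| "subst s (And a b) = And (subst s a) (subst s b)"
| "subst s (Imp a b) = Imp (subst s a) (subst s b)"
| "subst s (Conn c as) = Conn c (map (subst s) as)"
| "subst s (All y a) =
     (let y' = fresh_var (\<Union>z\<in>fv (All y a). fvt (s z)) y
      in All y' (subst (s(y := Var y')) a))"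
| "subst s (Ex y a) =
     (let y' = fresh_var (\<Union>z\<in>fv (Ex y a). fvt (s z)) y
      in Ex y' (subst (s(y := Var y')) a))"

definition subst1 :: "nat \<Rightarrow> 'f trm \<Rightarrow> ('c, 'p, 'f) fm \<Rightarrow> ('c, 'p, 'f) fm" where
  "subst1 x t a = subst (Var(x := t)) a"

text \<open>Iterated conjunction / disjunction of a nonempty list of formulas
  (given as head and tail).\<close>
fun conjs :: "('c, 'p, 'f) fm \<Rightarrow> ('c, 'p, 'f) fm list \<Rightarrow> ('c, 'p, 'f) fm" where
  "conjs a [] = a"
| "conjs a (b # bs) = And a (conjs b bs)"

fun disjs :: "('c, 'p, 'f) fm \<Rightarrow> ('c, 'p, 'f) fm list \<Rightarrow> ('c, 'p, 'f) fm" where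
  "disjs a [] = a"
| "disjs a (b # bs) = Or a (disjs b bs)"

definition bigAnd :: "('c, 'p, 'f) fm list \<Rightarrow> ('c, 'p, 'f) fm" where
  "bigAnd as = conjs (hd as) (tl as)"

definition bigOr :: "('c, 'p, 'f) fm list \<Rightarrow> ('c, 'p, 'f) fm" where
  "bigOr as = disjs (hd as) (tl as)"

definition closeAll :: "nat list \<Rightarrow> ('c, 'p, 'f) fm \<Rightarrow> ('c, 'p, 'f) fm" where
  "closeAll xs a = foldr All xs a"

text \<open>A finite L-lattice: the truth values form a finite lattice 'v (with
  join/meet interpreting Or/And); imp interprets the implication and ops c
  the further connective c.  Polarity: pol c i = True means '+' for the
  argument with 0-based index i.\<close>
definition L_lattice ::
  "('c \<Rightarrow> nat) \<Rightarrow> ('c \<Rightarrow> nat \<Rightarrow> bool) \<Rightarrow> ('c \<Rightarrow> 'v::{finite,complete_lattice} list \<Rightarrow> 'v)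
   \<Rightarrow> ('v \<Rightarrow> 'v \<Rightarrow> 'v) \<Rightarrow> bool" where
  "L_lattice ar pol ops imp \<longleftrightarrow>
     (\<forall>a b. top \<le> imp a b \<longleftrightarrow> a \<le> b) \<and>
     (\<forall>a a' b b'. a' \<le> a \<and> b \<le> b' \<longrightarrow> imp a b \<le> imp a' b') \<and>
     (\<forall>c xs ys. length xs = ar c \<and> length ys = ar c \<and>
        (\<forall>i < ar c. if pol c i then xs ! i \<le> ys ! i else ys ! i \<le> xs ! i)
        \<longrightarrow> ops c xs \<le> ops c ys)"

fun teval :: "('f \<Rightarrow> 'u list \<Rightarrow> 'u) \<Rightarrow> (nat \<Rightarrow> 'u) \<Rightarrow> 'f trm \<Rightarrow> 'u" where
  "teval F v (Var x) = v x"
| "teval F v (Fn f ts) = F f (map (teval F v) ts)"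

fun eval :: "('c \<Rightarrow> 'v::complete_lattice list \<Rightarrow> 'v) \<Rightarrow> ('v \<Rightarrow> 'v \<Rightarrow> 'v) \<Rightarrow>
    'u set \<Rightarrow> ('p \<Rightarrow> 'u list \<Rightarrow> 'v) \<Rightarrow> ('f \<Rightarrow> 'u list \<Rightarrow> 'u) \<Rightarrow> (nat \<Rightarrow> 'u) \<Rightarrow>
    ('c, 'p, 'f) fm \<Rightarrow> 'v" where
  "eval ops imp D P F v (Atom p ts) = P p (map (teval F v) ts)"
| "eval ops imp D P F v (Or a b) = sup (eval ops imp D P F v a) (eval ops imp D P F v b)"
| "eval ops imp D P F v (And a b) = inf (eval ops imp D P F v a) (eval ops imp D P F v b)"
| "eval ops imp D P F v (Imp a b) = imp (eval ops imp D P F v a) (eval ops imp D P F v b)"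
| "eval ops imp D P F v (Conn c as) = ops c (map (eval ops imp D P F v) as)"
| "eval ops imp D P F v (All x a) = Inf ((\<lambda>d. eval ops imp D P F (v(x := d)) a) ` D)"
| "eval ops imp D P F v (Ex x a) = Sup ((\<lambda>d. eval ops imp D P F (v(x := d)) a) ` D)"

definition is_struct :: "'u set \<Rightarrow> ('f \<Rightarrow> 'u list \<Rightarrow> 'u) \<Rightarrow> bool" where
  "is_struct D F \<longleftrightarrow> D \<noteq> {} \<and> (\<forall>f xs. set xs \<subseteq> D \<longrightarrow> F f xs \<in> D)"

text \<open>1-validity, relative to structures whose domain lives in type 'u.\<close>
definition valid :: "('c \<Rightarrow> 'v::complete_lattice list \<Rightarrow> 'v) \<Rightarrow> ('v \<Rightarrow> 'v \<Rightarrow> 'v) \<Rightarrow>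
    'u itself \<Rightarrow> ('c, 'p, 'f) fm \<Rightarrow> bool" where
  "valid ops imp U a \<longleftrightarrow>
     (\<forall>(D::'u set) P F v. is_struct D F \<and> range v \<subseteq> D \<longrightarrow> eval ops imp D P F v a = top)"

text \<open>C_1,...,C_n |=_1 C': validity of the universal closure of
  (C_1 /\ ... /\ C_n) -> C'; the meet of the premises is the lattice meet
  (top for n = 0).\<close>
definition entails :: "('c \<Rightarrow> 'v::complete_lattice list \<Rightarrow> 'v) \<Rightarrow> ('v \<Rightarrow> 'v \<Rightarrow> 'v) \<Rightarrow>
    'u itself \<Rightarrow> ('c, 'p, 'f) fm list \<Rightarrow> ('c, 'p, 'f) fm \<Rightarrow> bool" where
  "entails ops imp U Cs a \<longleftrightarrow>
     (\<forall>(D::'u set) P F v. is_struct D F \<and> range v \<subseteq> D \<longrightarrow>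
        imp (Inf ((\<lambda>C. eval ops imp D P F v C) ` set Cs)) (eval ops imp D P F v a) = top)"

datatype ('c, 'p, 'f) ctx =
    Hole
  | COrL "('c, 'p, 'f) ctx" "('c, 'p, 'f) fm"
  | COrR "('c, 'p, 'f) fm" "('c, 'p, 'f) ctx"
  | CAndL "('c, 'p, 'f) ctx" "('c, 'p, 'f) fm"
  | CAndR "('c, 'p, 'f) fm" "('c, 'p, 'f) ctx"
  | CImpL "('c, 'p, 'f) ctx" "('c, 'p, 'f) fm"
  | CImpR "('c, 'p, 'f) fm" "('c, 'p, 'f) ctx"
  | CConn 'c "('c, 'p, 'f) fm list" "('c, 'p, 'f) ctx" "('c, 'p, 'f) fm list"
  | CAll nat "('c, 'p, 'f) ctx"
  | CEx nat "('c, 'p, 'f) ctx"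

fun fill :: "('c, 'p, 'f) ctx \<Rightarrow> ('c, 'p, 'f) fm \<Rightarrow> ('c, 'p, 'f) fm" where
  "fill Hole b = b"
| "fill (COrL C a) b = Or (fill C b) a"
| "fill (COrR a C) b = Or a (fill C b)"
| "fill (CAndL C a) b = And (fill C b) a"
| "fill (CAndR a C) b = And a (fill C b)"
| "fill (CImpL C a) b = Imp (fill C b) a"
| "fill (CImpR a C) b = Imp a (fill C b)"
| "fill (CConn c l C r) b = Conn c (l @ [fill C b] @ r)"
| "fill (CAll x C) b = All x (fill C b)"
| "fill (CEx x C) b = Ex x (fill C b)"

text \<open>Polarity of the hole (True = positive).\<close>
fun cpol :: "('c \<Rightarrow> nat \<Rightarrow> bool) \<Rightarrow> ('c, 'p, 'f) ctx \<Rightarrow> bool" where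
  "cpol pol Hole = True"
| "cpol pol (COrL C a) = cpol pol C"
| "cpol pol (COrR a C) = cpol pol C"
| "cpol pol (CAndL C a) = cpol pol C"
| "cpol pol (CAndR a C) = cpol pol C"
| "cpol pol (CImpL C a) = (\<not> cpol pol C)"
| "cpol pol (CImpR a C) = cpol pol C"
| "cpol pol (CConn c l C r) = (pol c (length l) = cpol pol C)"
| "cpol pol (CAll x C) = cpol pol C"
| "cpol pol (CEx x C) = cpol pol C"

fun cbound :: "('c, 'p, 'f) ctx \<Rightarrow> nat set" where
  "cbound Hole = {}"
| "cbound (COrL C a) = cbound C"
| "cbound (COrR a C) = cbound C"
| "cbound (CAndL C a) = cbound C"
| "cbound (CAndR a C) = cbound C"
| "cbound (CImpL C a) = cbound C"
| "cbound (CImpR a C) = cbound C"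
| "cbound (CConn c l C r) = cbound C"
| "cbound (CAll x C) = insert x (cbound C)"
| "cbound (CEx x C) = insert x (cbound C)"

text \<open>sk pol W nf p q B: skolemize all strong quantifier occurrences of B,
  where p is the polarity of B (in the whole formula) and q the position of B
  (path of argument indices).  The occurrence at position q uses the new
  function symbols nf q 0, ..., nf q (W - 1); the arguments of a Skolem term
  are the free variables of the (already skolemized) quantified subformula.\<close>
fun sk :: "('c \<Rightarrow> nat \<Rightarrow> bool) \<Rightarrow> nat \<Rightarrow> (nat list \<Rightarrow> nat \<Rightarrow> 'f) \<Rightarrow> bool \<Rightarrow> nat list \<Rightarrow>
    ('c, 'p, 'f) fm \<Rightarrow> ('c, 'p, 'f) fm"
and sks :: "('c \<Rightarrow> nat \<Rightarrow> bool) \<Rightarrow> nat \<Rightarrow> (nat list \<Rightarrow> nat \<Rightarrow> 'f) \<Rightarrow> bool \<Rightarrow> nat list \<Rightarrow>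
    'c \<Rightarrow> nat \<Rightarrow> ('c, 'p, 'f) fm list \<Rightarrow> ('c, 'p, 'f) fm list" where
  "sk pol W nf p q (Atom P ts) = Atom P ts"
| "sk pol W nf p q (Or a b) = Or (sk pol W nf p (q @ [0]) a) (sk pol W nf p (q @ [1]) b)"
| "sk pol W nf p q (And a b) = And (sk pol W nf p (q @ [0]) a) (sk pol W nf p (q @ [1]) b)"
| "sk pol W nf p q (Imp a b) = Imp (sk pol W nf (\<not> p) (q @ [0]) a) (sk pol W nf p (q @ [1]) b)"
| "sk pol W nf p q (Conn c as) = Conn c (sks pol W nf p q c 0 as)"
| "sk pol W nf p q (All x a) =
     (let a' = sk pol W nf p (q @ [0]) a;
          xs = sorted_list_of_set (fv (All x a'))
      in if p then bigAnd (map (\<lambda>i. subst1 x (Fn (nf q i) (map Var xs)) a') [0..<W])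
         else All x a')"
| "sk pol W nf p q (Ex x a) =
     (let a' = sk pol W nf p (q @ [0]) a;
          xs = sorted_list_of_set (fv (Ex x a'))
      in if \<not> p then bigOr (map (\<lambda>i. subst1 x (Fn (nf q i) (map Var xs)) a') [0..<W])
         else Ex x a')"
| "sks pol W nf p q c i [] = []"
| "sks pol W nf p q c i (a # as) =
     sk pol W nf (pol c i = p) (q @ [i]) a # sks pol W nf p q c (Suc i) as"

fun spos :: "('c \<Rightarrow> nat \<Rightarrow> bool) \<Rightarrow> bool \<Rightarrow> nat list \<Rightarrow> ('c, 'p, 'f) fm \<Rightarrow> nat list set"
and sposs :: "('c \<Rightarrow> nat \<Rightarrow> bool) \<Rightarrow> bool \<Rightarrow> nat list \<Rightarrow> 'c \<Rightarrow> nat \<Rightarrow>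
    ('c, 'p, 'f) fm list \<Rightarrow> nat list set" where
  "spos pol p q (Atom P ts) = {}"
| "spos pol p q (Or a b) = spos pol p (q @ [0]) a \<union> spos pol p (q @ [1]) b"
| "spos pol p q (And a b) = spos pol p (q @ [0]) a \<union> spos pol p (q @ [1]) b"
| "spos pol p q (Imp a b) = spos pol (\<not> p) (q @ [0]) a \<union> spos pol p (q @ [1]) b"
| "spos pol p q (Conn c as) = sposs pol p q c 0 as"
| "spos pol p q (All x a) = (if p then {q} else {}) \<union> spos pol p (q @ [0]) a"
| "spos pol p q (Ex x a) = (if \<not> p then {q} else {}) \<union> spos pol p (q @ [0]) a"
| "sposs pol p q c i [] = {}"
| "sposs pol p q c i (a # as) = spos pol (pol c i = p) (q @ [i]) a \<union> sposs pol p q c (Suc i) as"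

definition is_skax :: "nat \<Rightarrow> ('c, 'p, 'f) fm \<Rightarrow> 'f list \<Rightarrow> bool" where
  "is_skax W S fs \<longleftrightarrow>
     (\<exists>A y xs. length fs = W \<and> distinct fs \<and> set fs \<inter> funs A = {} \<and>
        distinct xs \<and> y \<notin> set xs \<and> fv A \<subseteq> insert y (set xs) \<and>
        (S = closeAll xs (Imp (Ex y A)
               (bigOr (map (\<lambda>f. subst1 y (Fn f (map Var xs)) A) fs))) \<or>
         S = closeAll xs (Imp (bigAnd (map (\<lambda>f. subst1 y (Fn f (map Var xs)) A) fs))
               (All y A))))"

definition skax_seq :: "nat \<Rightarrow> ('c, 'p, 'f) fm list \<Rightarrow> 'f list list \<Rightarrow> bool" where
  "skax_seq W Ss Fs \<longleftrightarrow> length Ss = length Fs \<and>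
     (\<forall>j < length Ss. is_skax W (Ss ! j) (Fs ! j) \<and>
        (\<forall>j' < j. set (Fs ! j) \<inter> funs (Ss ! j') = {}))"

end

theory Submission
  imports Defs
begin


lemma finite_fvt[simp]: "finite (fvt t)"
  by (induction t) auto

lemma finite_fv[simp]: "finite (fv a)"
  by (induction a) auto

lemma teval_cong_v: "(\<forall>z\<in>fvt t. v z = v' z) \<Longrightarrow> teval F v t = teval F v' t"
  by (induction t) (auto cong: map_cong)

lemma eval_cong_v: "(\<forall>z\<in>fv a. v z = v' z) \<Longrightarrow> eval ops imp D P F v a = eval ops imp D P F v' a"
proof (induction a arbitrary: v v')
  case (Atom p ts) then show ?case by (auto intro!: arg_cong[where f="P p"] map_cong teval_cong_v)
next
  case (Conn c as) then show ?case by (auto intro!: arg_cong[where f="ops c"] map_cong)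
next
  case (All x a) then show ?case by (auto intro!: arg_cong[where f=Inf] image_cong)
next
  case (Ex x a) then show ?case by (auto intro!: arg_cong[where f=Sup] image_cong)
next
  case (Or a b)
  from Or.prems have h1: "\<forall>z\<in>fv a. v z = v' z" and h2: "\<forall>z\<in>fv b. v z = v' z" by auto
  show ?case using Or.IH(1)[OF h1] Or.IH(2)[OF h2] by simp
next
  case (And a b)
  from And.prems have h1: "\<forall>z\<in>fv a. v z = v' z" and h2: "\<forall>z\<in>fv b. v z = v' z" by auto
  show ?case using And.IH(1)[OF h1] And.IH(2)[OF h2] by simp
next
  case (Imp a b)
  from Imp.prems have h1: "\<forall>z\<in>fv a. v z = v' z" and h2: "\<forall>z\<in>fv b. v z = v' z" by auto
  show ?case using Imp.IH(1)[OF h1] Imp.IH(2)[OF h2] by simp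
qed

lemma teval_cong_F: "(\<forall>f\<in>funst t. F f = F' f) \<Longrightarrow> teval F v t = teval F' v t"
  by (induction t) (auto cong: map_cong)

lemma eval_cong_F: "(\<forall>f\<in>funs a. F f = F' f) \<Longrightarrow> eval ops imp D P F v a = eval ops imp D P F' v a"
proof (induction a arbitrary: v)
  case (Atom p ts) then show ?case by (auto intro!: arg_cong[where f="P p"] map_cong teval_cong_F)
next
  case (Conn c as) then show ?case by (auto intro!: arg_cong[where f="ops c"] map_cong)
next
  case (All x a) then show ?case by (auto intro!: arg_cong[where f=Inf] image_cong)
next
  case (Ex x a) then show ?case by (auto intro!: arg_cong[where f=Sup] image_cong)
next
  case (Or a b)
  from Or.prems have h1: "\<forall>f\<in>funs a. F f = F' f" and h2: "\<forall>f\<in>funs b. F f = F' f" by auto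
  show ?case using Or.IH(1)[OF h1] Or.IH(2)[OF h2] by simp
next
  case (And a b)
  from And.prems have h1: "\<forall>f\<in>funs a. F f = F' f" and h2: "\<forall>f\<in>funs b. F f = F' f" by auto
  show ?case using And.IH(1)[OF h1] And.IH(2)[OF h2] by simp
next
  case (Imp a b)
  from Imp.prems have h1: "\<forall>f\<in>funs a. F f = F' f" and h2: "\<forall>f\<in>funs b. F f = F' f" by auto
  show ?case using Imp.IH(1)[OF h1] Imp.IH(2)[OF h2] by simp
qed

lemma teval_substt: "teval F v (substt s t) = teval F (\<lambda>z. teval F v (s z)) t"
  by (induction t) (auto cong: map_cong)

lemma fresh_var_notin: assumes fin: "finite S" shows "fresh_var S y \<notin> S"
proof -
  have "Suc (Max S) \<notin> S" using Max_ge[OF fin] Suc_n_not_le_n by blast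
  then show ?thesis by (simp add: fresh_var_def)
qed

lemma eval_subst: "eval ops imp D P F v (subst s a) = eval ops imp D P F (\<lambda>z. teval F v (s z)) a"
proof (induction a arbitrary: s v)
  case (Atom p ts) then show ?case by (simp add: teval_substt comp_def)
next
  case (Conn c as) then show ?case by (auto intro!: arg_cong[where f="ops c"])
next
  case (All y a)
  define S where "S = (\<Union>z\<in>fv (All y a). fvt (s z))"
  define y' where "y' = fresh_var S y"
  have fin: "finite S" unfolding S_def by simp
  have ny: "y' \<notin> S" unfolding y'_def using fresh_var_notin[OF fin] .
  have eq: "subst s (All y a) = All y' (subst (s(y := Var y')) a)"
    by (simp add: Let_def S_def y'_def)
  have "eval ops imp D P F v (subst s (All y a))
      = Inf ((\<lambda>d. eval ops imp D P F (\<lambda>z. teval F (v(y' := d)) ((s(y := Var y')) z)) a) ` D)"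
    unfolding eq by (simp only: eval.simps All.IH)
  also have "\<dots> = Inf ((\<lambda>d. eval ops imp D P F ((\<lambda>z. teval F v (s z))(y := d)) a) ` D)"
  proof (intro arg_cong[where f=Inf] image_cong refl eval_cong_v ballI)
    fix d z assume z: "z \<in> fv a"
    show "teval F (v(y' := d)) ((s(y := Var y')) z) = ((\<lambda>z. teval F v (s z))(y := d)) z"
    proof (cases "z = y")
      case False
      then have "z \<in> fv (All y a)" using z by simp
      then have "y' \<notin> fvt (s z)" using ny unfolding S_def by blast
      then show ?thesis using False by (auto intro!: teval_cong_v)
    qed simp
  qed
  finally show ?case by simp
next
  case (Ex y a)
  define S where "S = (\<Union>z\<in>fv (Ex y a). fvt (s z))"
  define y' where "y' = fresh_var S y"
  have fin: "finite S" unfolding S_def by simp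
  have ny: "y' \<notin> S" unfolding y'_def using fresh_var_notin[OF fin] .
  have eq: "subst s (Ex y a) = Ex y' (subst (s(y := Var y')) a)"
    by (simp add: Let_def S_def y'_def)
  have "eval ops imp D P F v (subst s (Ex y a))
      = Sup ((\<lambda>d. eval ops imp D P F (\<lambda>z. teval F (v(y' := d)) ((s(y := Var y')) z)) a) ` D)"
    unfolding eq by (simp only: eval.simps Ex.IH)
  also have "\<dots> = Sup ((\<lambda>d. eval ops imp D P F ((\<lambda>z. teval F v (s z))(y := d)) a) ` D)"
  proof (intro arg_cong[where f=Sup] image_cong refl eval_cong_v ballI)
    fix d z assume z: "z \<in> fv a"
    show "teval F (v(y' := d)) ((s(y := Var y')) z) = ((\<lambda>z. teval F v (s z))(y := d)) z"
    proof (cases "z = y")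
      case False
      then have "z \<in> fv (Ex y a)" using z by simp
      then have "y' \<notin> fvt (s z)" using ny unfolding S_def by blast
      then show ?thesis using False by (auto intro!: teval_cong_v)
    qed simp
  qed
  finally show ?case by simp
qed auto

lemma eval_subst1: "eval ops imp D P F v (subst1 x t a) = eval ops imp D P F (v(x := teval F v t)) a"
  unfolding subst1_def eval_subst
  by (rule eval_cong_v) auto

lemma funst_substt: "(\<And>z. funst (s z) \<subseteq> G) \<Longrightarrow> funst (substt s t) \<subseteq> funst t \<union> G"
proof (induction t)
  case (Var x) then show ?case by simp
next
  case (Fn f ts) then show ?case by fastforce
qed

lemma funs_subst: "(\<And>z. funst (s z) \<subseteq> G) \<Longrightarrow> funs (subst s a) \<subseteq> funs a \<union> G"
proof (induction a arbitrary: s)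
  case (Atom p ts)
  have "funst (substt s t) \<subseteq> funst t \<union> G" for t using Atom by (rule funst_substt)
  then show ?case by (simp add: UN_subset_iff) blast
next
  case (All y a)
  define y' where "y' = fresh_var (\<Union>z\<in>fv (All y a). fvt (s z)) y"
  have "\<And>z. funst ((s(y := Var y')) z) \<subseteq> G" using All.prems by simp
  then have "funs (subst (s(y := Var y')) a) \<subseteq> funs a \<union> G" by (rule All.IH)
  then show ?case by (simp add: Let_def y'_def)
next
  case (Ex y a)
  define y' where "y' = fresh_var (\<Union>z\<in>fv (Ex y a). fvt (s z)) y"
  have "\<And>z. funst ((s(y := Var y')) z) \<subseteq> G" using Ex.prems by simp
  then have "funs (subst (s(y := Var y')) a) \<subseteq> funs a \<union> G" by (rule Ex.IH)
  then show ?case by (simp add: Let_def y'_def)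
next
  case (Or a b) thus ?case using Or.IH[of s] by auto
next
  case (And a b) thus ?case using And.IH[of s] by auto
next
  case (Imp a b) thus ?case using Imp.IH[of s] by auto
next
  case (Conn c as) thus ?case by (simp; blast)
qed

lemma funs_subst1_Fn: "funs (subst1 x (Fn f (map Var xs)) a) \<subseteq> insert f (funs a)"
proof -
  have "funst ((Var(x := Fn f (map Var xs))) z) \<subseteq> {f}" for z by simp
  then have "funs (subst (Var(x := Fn f (map Var xs))) a) \<subseteq> funs a \<union> {f}" by (rule funs_subst)
  then show ?thesis by (simp add: subst1_def)
qed



lemma eval_conjs: "eval ops imp D P F v (conjs a bs) = Inf ((\<lambda>x. eval ops imp D P F v x) ` set (a # bs))"
  by (induction bs arbitrary: a) (auto simp: Inf_insert)

lemma eval_disjs: "eval ops imp D P F v (disjs a bs) = Sup ((\<lambda>x. eval ops imp D P F v x) ` set (a # bs))"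
  by (induction bs arbitrary: a) (auto simp: Sup_insert)

lemma eval_bigAnd: "L \<noteq> [] \<Longrightarrow> eval ops imp D P F v (bigAnd L) = Inf ((\<lambda>x. eval ops imp D P F v x) ` set L)"
  unfolding bigAnd_def by (cases L) (auto simp: eval_conjs)

lemma eval_bigOr: "L \<noteq> [] \<Longrightarrow> eval ops imp D P F v (bigOr L) = Sup ((\<lambda>x. eval ops imp D P F v x) ` set L)"
  unfolding bigOr_def by (cases L) (auto simp: eval_disjs)

lemma funs_conjs: "funs (conjs a bs) = funs a \<union> (\<Union>x\<in>set bs. funs x)"
  by (induction bs arbitrary: a) auto

lemma funs_disjs: "funs (disjs a bs) = funs a \<union> (\<Union>x\<in>set bs. funs x)"
  by (induction bs arbitrary: a) auto

lemma funs_bigAnd: "L \<noteq> [] \<Longrightarrow> funs (bigAnd L) = (\<Union>x\<in>set L. funs x)"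
  unfolding bigAnd_def by (cases L) (auto simp: funs_conjs)

lemma funs_bigOr: "L \<noteq> [] \<Longrightarrow> funs (bigOr L) = (\<Union>x\<in>set L. funs x)"
  unfolding bigOr_def by (cases L) (auto simp: funs_disjs)

lemma funs_closeAll[simp]: "funs (closeAll xs a) = funs a"
  unfolding closeAll_def by (induction xs) auto

lemma eval_closeAll_top:
  "eval ops imp D P F v (closeAll xs a) = top \<Longrightarrow> range v \<subseteq> D \<Longrightarrow> eval ops imp D P F v a = top"
proof (induction xs arbitrary: v)
  case Nil then show ?case by (simp add: closeAll_def)
next
  case (Cons x xs)
  have "v x \<in> D" using Cons.prems(2) by auto
  then have "eval ops imp D P F (v(x := v x)) (closeAll xs a) = top"
    using Cons.prems(1) by (auto simp: closeAll_def INF_top_conv)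
  then show ?case using Cons.IH Cons.prems(2) by simp
qed

lemma eval_closeAll_intro:
  "(\<And>v'. range v' \<subseteq> D \<Longrightarrow> eval ops imp D P F v' a = top) \<Longrightarrow> range v \<subseteq> D \<Longrightarrow>
   eval ops imp D P F v (closeAll xs a) = top"
proof (induction xs arbitrary: v)
  case Nil then show ?case by (simp add: closeAll_def)
next
  case (Cons x xs)
  have "\<And>d. d \<in> D \<Longrightarrow> eval ops imp D P F (v(x := d)) (closeAll xs a) = top"
    using Cons by (auto intro!: Cons.IH)
  then show ?case by (auto simp: closeAll_def INF_top_conv)
qed

lemma imp_top_iff: "L_lattice ar pol ops imp \<Longrightarrow> (imp a b = top) \<longleftrightarrow> a \<le> b"
  unfolding L_lattice_def by (metis top.extremum_unique)

fun cwf :: "('c \<Rightarrow> nat) \<Rightarrow> ('c, 'p, 'f) ctx \<Rightarrow> bool" where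
  "cwf ar Hole = True"
| "cwf ar (COrL C a) = cwf ar C"
| "cwf ar (COrR a C) = cwf ar C"
| "cwf ar (CAndL C a) = cwf ar C"
| "cwf ar (CAndR a C) = cwf ar C"
| "cwf ar (CImpL C a) = cwf ar C"
| "cwf ar (CImpR a C) = cwf ar C"
| "cwf ar (CConn c l C r) = (length l + Suc (length r) = ar c \<and> cwf ar C)"
| "cwf ar (CAll x C) = cwf ar C"
| "cwf ar (CEx x C) = cwf ar C"

lemma wf_fill: "wf ar (fill C X) \<Longrightarrow> cwf ar C \<and> wf ar X"
  by (induction C) auto

lemma ctx_cong:
  "(\<And>v. range v \<subseteq> D \<Longrightarrow> eval ops imp D P F v X = eval ops imp D P F v Y) \<Longrightarrow> range v \<subseteq> D \<Longrightarrow>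
   eval ops imp D P F v (fill C X) = eval ops imp D P F v (fill C Y)"
proof (induction C arbitrary: v)
  case (CAll x C)
  have "\<And>d. d \<in> D \<Longrightarrow> eval ops imp D P F (v(x := d)) (fill C X) = eval ops imp D P F (v(x := d)) (fill C Y)"
    using CAll by (auto intro!: CAll.IH)
  then show ?case by (auto intro!: arg_cong[where f=Inf] image_cong)
next
  case (CEx x C)
  have "\<And>d. d \<in> D \<Longrightarrow> eval ops imp D P F (v(x := d)) (fill C X) = eval ops imp D P F (v(x := d)) (fill C Y)"
    using CEx by (auto intro!: CEx.IH)
  then show ?case by (auto intro!: arg_cong[where f=Sup] image_cong)
qed auto

lemma nth_mid_eq: "i \<noteq> length l \<Longrightarrow> (l @ [x] @ r) ! i = (l @ [y] @ r) ! i"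
  by (auto simp: nth_append nth_Cons split: nat.splits)

lemma nth_mid: "(l @ [x] @ r) ! (length l) = x"
  by (simp add: nth_append)

lemma ctx_mono:
  assumes lat: "L_lattice ar pol ops imp"
  shows "cwf ar C \<Longrightarrow> (\<And>v. range v \<subseteq> D \<Longrightarrow> (if cpol pol C then eval ops imp D P F v X \<le> eval ops imp D P F v Y
          else eval ops imp D P F v Y \<le> eval ops imp D P F v X)) \<Longrightarrow> range v \<subseteq> D \<Longrightarrow>
   eval ops imp D P F v (fill C X) \<le> eval ops imp D P F v (fill C Y)"
proof (induction C arbitrary: X Y v)
  case Hole then show ?case by simp
next
  case (COrL C a)
  have "eval ops imp D P F v (fill C X) \<le> eval ops imp D P F v (fill C Y)"
    using COrL.prems by (intro COrL.IH) auto
  then show ?case by (auto intro: sup_mono inf_mono le_supI1 le_supI2 le_infI1 le_infI2)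
next
  case (COrR a C)
  have "eval ops imp D P F v (fill C X) \<le> eval ops imp D P F v (fill C Y)"
    using COrR.prems by (intro COrR.IH) auto
  then show ?case by (auto intro: sup_mono inf_mono le_supI1 le_supI2 le_infI1 le_infI2)
next
  case (CAndL C a)
  have "eval ops imp D P F v (fill C X) \<le> eval ops imp D P F v (fill C Y)"
    using CAndL.prems by (intro CAndL.IH) auto
  then show ?case by (auto intro: sup_mono inf_mono le_supI1 le_supI2 le_infI1 le_infI2)
next
  case (CAndR a C)
  have "eval ops imp D P F v (fill C X) \<le> eval ops imp D P F v (fill C Y)"
    using CAndR.prems by (intro CAndR.IH) auto
  then show ?case by (auto intro: sup_mono inf_mono le_supI1 le_supI2 le_infI1 le_infI2)
next
  case (CImpL C a)
  have "eval ops imp D P F v (fill C Y) \<le> eval ops imp D P F v (fill C X)"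
    using CImpL.prems by (intro CImpL.IH) (auto split: if_splits)
  then show ?case using lat unfolding L_lattice_def by simp
next
  case (CImpR a C)
  have "eval ops imp D P F v (fill C X) \<le> eval ops imp D P F v (fill C Y)"
    using CImpR.prems by (intro CImpR.IH) (auto split: if_splits)
  then show ?case using lat unfolding L_lattice_def by simp
next
  case (CConn c l C r)
  let ?e = "eval ops imp D P F v"
  have len: "length l + Suc (length r) = ar c" using CConn.prems by simp
  have comp: "if pol c (length l) then ?e (fill C X) \<le> ?e (fill C Y) else ?e (fill C Y) \<le> ?e (fill C X)"
  proof (cases "pol c (length l)")
    case True
    then have "?e (fill C X) \<le> ?e (fill C Y)"
      using CConn.prems by (intro CConn.IH) (auto split: if_splits)
    then show ?thesis using True by simp
  next
    case False
    then have "?e (fill C Y) \<le> ?e (fill C X)"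
      using CConn.prems by (intro CConn.IH) (auto split: if_splits)
    then show ?thesis using False by simp
  qed
  let ?xs = "map ?e (l @ [fill C X] @ r)" and ?ys = "map ?e (l @ [fill C Y] @ r)"
  have "\<forall>i < ar c. if pol c i then ?xs ! i \<le> ?ys ! i else ?ys ! i \<le> ?xs ! i"
  proof (intro allI impI)
    fix i assume i: "i < ar c"
    show "if pol c i then ?xs ! i \<le> ?ys ! i else ?ys ! i \<le> ?xs ! i"
    proof (cases "i = length l")
      case True
      then show ?thesis using comp by (simp add: nth_append)
    next
      case False
      have "?xs ! i = ?ys ! i"
        using nth_mid_eq[of i "map ?e l" "?e (fill C X)" "map ?e r" "?e (fill C Y)"] False by simp
      then show ?thesis by simp
    qed
  qed
  moreover have "length ?xs = ar c" "length ?ys = ar c" using len by auto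
  moreover have "\<And>xs ys. length xs = ar c \<Longrightarrow> length ys = ar c \<Longrightarrow>
     (\<forall>i < ar c. if pol c i then xs ! i \<le> ys ! i else ys ! i \<le> xs ! i) \<Longrightarrow> ops c xs \<le> ops c ys"
    using lat unfolding L_lattice_def by blast
  ultimately have "ops c ?xs \<le> ops c ?ys" by blast
  then show ?case by simp
next
  case (CAll x C)
  have "\<And>d. d \<in> D \<Longrightarrow> eval ops imp D P F (v(x := d)) (fill C X) \<le> eval ops imp D P F (v(x := d)) (fill C Y)"
    using CAll.prems by (intro CAll.IH) auto
  then show ?case by (auto intro!: INF_mono)
next
  case (CEx x C)
  have "\<And>d. d \<in> D \<Longrightarrow> eval ops imp D P F (v(x := d)) (fill C X) \<le> eval ops imp D P F (v(x := d)) (fill C Y)"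
    using CEx.prems by (intro CEx.IH) auto
  then show ?case by (auto intro!: SUP_mono)
qed



lemma teval_in_D: "is_struct D F \<Longrightarrow> range v \<subseteq> D \<Longrightarrow> teval F v t \<in> D"
proof (induction t)
  case (Var x) then show ?case by auto
next
  case (Fn f ts)
  then have "set (map (teval F v) ts) \<subseteq> D" by auto
  then show ?case using Fn.prems(1) unfolding is_struct_def by simp
qed

lemma length_sks[simp]: "length (sks pol W nf p q c i as) = length as"
  by (induction as arbitrary: i) auto

lemma nth_sks: "k < length as \<Longrightarrow> sks pol W nf p q c i as ! k = sk pol W nf (pol c (i + k) = p) (q @ [i + k]) (as ! k)"
proof (induction as arbitrary: i k)
  case Nil then show ?case by simp
next
  case (Cons a as)
  then show ?case by (cases k) auto
qed

lemma teval_Fn_Var: "teval F v (Fn f (map Var xs)) = F f (map v xs)"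
  by (simp add: comp_def)

lemma eval_skAll: "W > 0 \<Longrightarrow> eval ops imp D P F v (bigAnd (map (\<lambda>i. subst1 x (Fn (g i) (map Var xs)) a) [0..<W]))
   = (INF i\<in>{0..<W}. eval ops imp D P F (v(x := F (g i) (map v xs))) a)"
  by (simp add: eval_bigAnd eval_subst1 teval_Fn_Var image_image del: teval.simps)

lemma eval_skEx: "W > 0 \<Longrightarrow> eval ops imp D P F v (bigOr (map (\<lambda>i. subst1 x (Fn (g i) (map Var xs)) a) [0..<W]))
   = (SUP i\<in>{0..<W}. eval ops imp D P F (v(x := F (g i) (map v xs))) a)"
  by (simp add: eval_bigOr eval_subst1 teval_Fn_Var image_image del: teval.simps)

lemma Fn_in_D: assumes "is_struct D F" "range v \<subseteq> D" shows "F f (map v xs) \<in> D"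
proof -
  have "set (map v xs) \<subseteq> D" using assms(2) by auto
  then show ?thesis using assms(1) unfolding is_struct_def by blast
qed

lemma sk_mono:
  assumes lat: "L_lattice ar pol ops imp" and st: "is_struct D F" and W: "W > 0"
  shows "wf ar B \<Longrightarrow> range v \<subseteq> D \<Longrightarrow>
    (if p then eval ops imp D P F v B \<le> eval ops imp D P F v (sk pol W nf p q B)
     else eval ops imp D P F v (sk pol W nf p q B) \<le> eval ops imp D P F v B)"
proof (induction B arbitrary: p q v)
  case (Atom P ts) then show ?case by simp
next
  case (Or a b)
  have h1: "if p then eval ops imp D P F v a \<le> eval ops imp D P F v (sk pol W nf p (q @ [0]) a)
     else eval ops imp D P F v (sk pol W nf p (q @ [0]) a) \<le> eval ops imp D P F v a"
    using Or.prems by (intro Or.IH) auto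
  have h2: "if p then eval ops imp D P F v b \<le> eval ops imp D P F v (sk pol W nf p (q @ [1]) b)
     else eval ops imp D P F v (sk pol W nf p (q @ [1]) b) \<le> eval ops imp D P F v b"
    using Or.prems by (intro Or.IH) auto
  show ?case using h1 h2 by (cases p) (auto intro: le_supI1 le_supI2 order_trans)
next
  case (And a b)
  have h1: "if p then eval ops imp D P F v a \<le> eval ops imp D P F v (sk pol W nf p (q @ [0]) a)
     else eval ops imp D P F v (sk pol W nf p (q @ [0]) a) \<le> eval ops imp D P F v a"
    using And.prems by (intro And.IH) auto
  have h2: "if p then eval ops imp D P F v b \<le> eval ops imp D P F v (sk pol W nf p (q @ [1]) b)
     else eval ops imp D P F v (sk pol W nf p (q @ [1]) b) \<le> eval ops imp D P F v b"
    using And.prems by (intro And.IH) auto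
  show ?case using h1 h2 by (cases p) (auto intro: le_infI1 le_infI2 order_trans)
next
  case (Imp a b)
  have im: "\<And>a a' b b'. a' \<le> a \<Longrightarrow> b \<le> b' \<Longrightarrow> imp a b \<le> imp a' b'"
    using lat unfolding L_lattice_def by blast
  have h1: "if \<not>p then eval ops imp D P F v a \<le> eval ops imp D P F v (sk pol W nf (\<not>p) (q @ [0]) a)
     else eval ops imp D P F v (sk pol W nf (\<not>p) (q @ [0]) a) \<le> eval ops imp D P F v a"
    using Imp.prems by (intro Imp.IH) auto
  have h2: "if p then eval ops imp D P F v b \<le> eval ops imp D P F v (sk pol W nf p (q @ [1]) b)
     else eval ops imp D P F v (sk pol W nf p (q @ [1]) b) \<le> eval ops imp D P F v b"
    using Imp.prems by (intro Imp.IH) auto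
  show ?case using h1 h2 by (cases p) (auto intro: im)
next
  case (Conn c as)
  let ?e = "eval ops imp D P F v"
  let ?xs = "map ?e as" and ?ys = "map ?e (sks pol W nf p q c 0 as)"
  have len: "length as = ar c" and wfs: "list_all (wf ar) as" using Conn.prems by auto
  have mono3: "\<And>xs ys. length xs = ar c \<Longrightarrow> length ys = ar c \<Longrightarrow>
     (\<forall>i < ar c. if pol c i then xs ! i \<le> ys ! i else ys ! i \<le> xs ! i) \<Longrightarrow> ops c xs \<le> ops c ys"
    using lat unfolding L_lattice_def by blast
  have comp: "if (pol c i = p) then ?e (as ! i) \<le> ?e (sks pol W nf p q c 0 as ! i)
      else ?e (sks pol W nf p q c 0 as ! i) \<le> ?e (as ! i)" if i: "i < ar c" for i
  proof -
    have "as ! i \<in> set as" using i len by simp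
    moreover have "wf ar (as ! i)" using wfs i len by (simp add: list_all_length)
    ultimately have "if (pol c i = p) then ?e (as ! i) \<le> ?e (sk pol W nf (pol c i = p) (q @ [i]) (as ! i))
      else ?e (sk pol W nf (pol c i = p) (q @ [i]) (as ! i)) \<le> ?e (as ! i)"
      using Conn.prems(2) by (intro Conn.IH)
    moreover have "sks pol W nf p q c 0 as ! i = sk pol W nf (pol c i = p) (q @ [i]) (as ! i)"
      using i len by (simp add: nth_sks)
    ultimately show ?thesis by (simp only:)
  qed
  show ?case
  proof (cases p)
    case True
    have "ops c ?xs \<le> ops c ?ys"
    proof (rule mono3)
      show "\<forall>i<ar c. if pol c i then ?xs ! i \<le> ?ys ! i else ?ys ! i \<le> ?xs ! i"
      proof (intro allI impI)
        fix i assume i: "i < ar c"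
        show "if pol c i then ?xs ! i \<le> ?ys ! i else ?ys ! i \<le> ?xs ! i"
          using comp[OF i] True len i by (auto split: if_splits)
      qed
    qed (use len in auto)
    then show ?thesis using True by simp
  next
    case False
    have "ops c ?ys \<le> ops c ?xs"
    proof (rule mono3)
      show "\<forall>i<ar c. if pol c i then ?ys ! i \<le> ?xs ! i else ?xs ! i \<le> ?ys ! i"
      proof (intro allI impI)
        fix i assume i: "i < ar c"
        show "if pol c i then ?ys ! i \<le> ?xs ! i else ?xs ! i \<le> ?ys ! i"
          using comp[OF i] False len i by (auto split: if_splits)
      qed
    qed (use len in auto)
    then show ?thesis using False by simp
  qed
next
  case (All x a)
  let ?a' = "sk pol W nf p (q @ [0]) a"
  let ?xs = "sorted_list_of_set (fv (All x ?a'))"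
  have IH: "\<And>d. d \<in> D \<Longrightarrow> (if p then eval ops imp D P F (v(x := d)) a \<le> eval ops imp D P F (v(x := d)) ?a'
     else eval ops imp D P F (v(x := d)) ?a' \<le> eval ops imp D P F (v(x := d)) a)"
    using All.prems by (intro All.IH) auto
  show ?case
  proof (cases p)
    case True
    have "eval ops imp D P F v (All x a) \<le> (INF i\<in>{0..<W}. eval ops imp D P F (v(x := F (nf q i) (map v ?xs))) ?a')"
    proof (rule INF_greatest)
      fix i assume "i \<in> {0..<W}"
      have d: "F (nf q i) (map v ?xs) \<in> D" using Fn_in_D[OF st All.prems(2)] .
      have "eval ops imp D P F v (All x a) \<le> eval ops imp D P F (v(x := F (nf q i) (map v ?xs))) a"
        using d by (auto intro: INF_lower)
      also have "\<dots> \<le> eval ops imp D P F (v(x := F (nf q i) (map v ?xs))) ?a'"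
        using IH[OF d] True by simp
      finally show "eval ops imp D P F v (All x a) \<le> eval ops imp D P F (v(x := F (nf q i) (map v ?xs))) ?a'" .
    qed
    then show ?thesis using True W by (simp add: Let_def eval_skAll del: eval.simps)
  next
    case False
    have "eval ops imp D P F v (All x ?a') \<le> eval ops imp D P F v (All x a)"
      using IH False by (auto intro!: INF_mono)
    then show ?thesis using False by (simp add: Let_def)
  qed
next
  case (Ex x a)
  let ?a' = "sk pol W nf p (q @ [0]) a"
  let ?xs = "sorted_list_of_set (fv (Ex x ?a'))"
  have IH: "\<And>d. d \<in> D \<Longrightarrow> (if p then eval ops imp D P F (v(x := d)) a \<le> eval ops imp D P F (v(x := d)) ?a'
     else eval ops imp D P F (v(x := d)) ?a' \<le> eval ops imp D P F (v(x := d)) a)"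
    using Ex.prems by (intro Ex.IH) auto
  show ?case
  proof (cases p)
    case False
    have "(SUP i\<in>{0..<W}. eval ops imp D P F (v(x := F (nf q i) (map v ?xs))) ?a') \<le> eval ops imp D P F v (Ex x a)"
    proof (rule SUP_least)
      fix i assume "i \<in> {0..<W}"
      have d: "F (nf q i) (map v ?xs) \<in> D" using Fn_in_D[OF st Ex.prems(2)] .
      have "eval ops imp D P F (v(x := F (nf q i) (map v ?xs))) ?a' \<le> eval ops imp D P F (v(x := F (nf q i) (map v ?xs))) a"
        using IH[OF d] False by simp
      also have "\<dots> \<le> eval ops imp D P F v (Ex x a)"
        using d by (auto intro: SUP_upper)
      finally show "eval ops imp D P F (v(x := F (nf q i) (map v ?xs))) ?a' \<le> eval ops imp D P F v (Ex x a)" .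
    qed
    then show ?thesis using False W by (simp add: Let_def eval_skEx del: eval.simps)
  next
    case True
    have "eval ops imp D P F v (Ex x a) \<le> eval ops imp D P F v (Ex x ?a')"
      using IH True by (auto intro!: SUP_mono)
    then show ?thesis using True by (simp add: Let_def)
  qed
qed



lemma exists_cover:
  fixes h :: "'u \<Rightarrow> 'v::finite"
  assumes ne: "D \<noteq> {}"
  shows "\<exists>g. (\<forall>k. g k \<in> D) \<and> h ` g ` {0..<card (UNIV::'v set)} = h ` D"
proof -
  let ?T = "h ` D" and ?W = "card (UNIV::'v set)"
  have finT: "finite ?T" by simp
  have cT: "card ?T \<le> ?W" by (rule card_mono) auto
  obtain d0 where d0: "d0 \<in> D" using ne by blast
  obtain e where e: "bij_betw e {0..<card ?T} ?T" using ex_bij_betw_nat_finite[OF finT] by blast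
  define g where "g k = (if k < card ?T then inv_into D h (e k) else d0)" for k
  have eT: "k < card ?T \<Longrightarrow> e k \<in> ?T" for k using e by (auto simp: bij_betw_def)
  have gD: "\<forall>k. g k \<in> D" unfolding g_def using d0 eT by (auto intro: inv_into_into)
  have hg: "k < card ?T \<Longrightarrow> h (g k) = e k" for k unfolding g_def using eT by (auto intro: f_inv_into_f)
  have "h ` g ` {0..<?W} = h ` D"
  proof
    show "h ` g ` {0..<?W} \<subseteq> h ` D" using gD by auto
  next
    show "h ` D \<subseteq> h ` g ` {0..<?W}"
    proof
      fix t assume t: "t \<in> h ` D"
      have "t \<in> e ` {0..<card ?T}" using t e by (simp add: bij_betw_def)
      then obtain k where k: "k < card ?T" "e k = t" by auto
      have "k < ?W" using k cT by simp
      then show "t \<in> h ` g ` {0..<?W}" using hg[OF k(1)] k(2) by force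
    qed
  qed
  then show ?thesis using gD by blast
qed

lemma skax_sat:
  fixes ops :: "'c \<Rightarrow> 'v::{finite,complete_lattice} list \<Rightarrow> 'v" and D :: "'u set"
  assumes lat: "L_lattice ar pol ops imp" and st: "is_struct D F" and sk: "is_skax W S fs"
    and W: "W = card (UNIV :: 'v set)"
  shows "\<exists>F'. is_struct D F' \<and> (\<forall>f. f \<notin> set fs \<longrightarrow> F' f = F f) \<and>
      (\<forall>v. range v \<subseteq> D \<longrightarrow> eval ops imp D P F' v S = top)"
proof -
  obtain A y xs where lenfs: "length fs = W" and dfs: "distinct fs" and disj: "set fs \<inter> funs A = {}"
    and dxs: "distinct xs" and yxs: "y \<notin> set xs" and fvA: "fv A \<subseteq> insert y (set xs)"
    and S: "S = closeAll xs (Imp (Ex y A) (bigOr (map (\<lambda>f. subst1 y (Fn f (map Var xs)) A) fs))) \<or>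
            S = closeAll xs (Imp (bigAnd (map (\<lambda>f. subst1 y (Fn f (map Var xs)) A) fs)) (All y A))"
    using sk unfolding is_skax_def by blast
  have ne: "D \<noteq> {}" using st unfolding is_struct_def by blast
  have Wpos: "W > 0" using W by (simp add: finite_UNIV_card_ge_0)
  define w0 where "w0 args = (SOME w. range w \<subseteq> D \<and> map w xs = args)" for args
  define h where "h args d = eval ops imp D P F ((w0 args)(y := d)) A" for args d
  have "\<forall>args. \<exists>g. (\<forall>k. g k \<in> D) \<and> h args ` g ` {0..<W} = h args ` D"
    using exists_cover[OF ne] W by blast
  then obtain wit where wit: "\<And>args. (\<forall>k. wit args k \<in> D) \<and> h args ` wit args ` {0..<W} = h args ` D"
    by metis
  define F' where "F' f args = (if f \<in> set fs \<and> (\<exists>w. range w \<subseteq> D \<and> map w xs = args)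
      then wit args (SOME k. k < W \<and> fs ! k = f) else F f args)" for f args
  have st': "is_struct D F'"
    using st wit unfolding is_struct_def F'_def by auto
  have agree: "\<forall>f. f \<notin> set fs \<longrightarrow> F' f = F f"
    unfolding F'_def by (auto intro!: ext)
  have evA: "eval ops imp D P F' u A = eval ops imp D P F u A" for u
    using agree disj by (intro eval_cong_F) auto
  have main: "(\<lambda>x. eval ops imp D P F' v x) ` set (map (\<lambda>f. subst1 y (Fn f (map Var xs)) A) fs)
      = (\<lambda>d. eval ops imp D P F' (v(y := d)) A) ` D" if v: "range v \<subseteq> D" for v
  proof -
    let ?args = "map v xs"
    have ex: "\<exists>w. range w \<subseteq> D \<and> map w xs = ?args" using v by blast
    then have w0: "range (w0 ?args) \<subseteq> D \<and> map (w0 ?args) xs = ?args"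
      unfolding w0_def by (rule someI_ex)
    have hv: "h ?args d = eval ops imp D P F' (v(y := d)) A" for d
    proof -
      have "\<forall>z\<in>fv A. ((w0 ?args)(y := d)) z = (v(y := d)) z"
      proof
        fix z assume "z \<in> fv A"
        then have "z = y \<or> z \<in> set xs" using fvA by blast
        then show "((w0 ?args)(y := d)) z = (v(y := d)) z"
          using w0 by (auto simp: map_eq_conv)
      qed
      then show ?thesis unfolding h_def evA by (rule eval_cong_v)
    qed
    have Fk: "F' (fs ! k) ?args = wit ?args k" if k: "k < W" for k
    proof -
      have "(SOME k'. k' < W \<and> fs ! k' = fs ! k) = k"
        using k dfs lenfs by (auto simp: nth_eq_iff_index_eq)
      then show ?thesis unfolding F'_def using ex k lenfs by auto
    qed
    have "(\<lambda>x. eval ops imp D P F' v x) ` set (map (\<lambda>f. subst1 y (Fn f (map Var xs)) A) fs)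
        = (\<lambda>f. eval ops imp D P F' (v(y := F' f ?args)) A) ` set fs"
      unfolding set_map image_image by (simp add: eval_subst1 teval_Fn_Var del: teval.simps)
    also have "set fs = (\<lambda>k. fs ! k) ` {0..<W}" using lenfs by (auto simp: set_conv_nth)
    also have "(\<lambda>f. eval ops imp D P F' (v(y := F' f ?args)) A) ` ((\<lambda>k. fs ! k) ` {0..<W})
        = (\<lambda>k. h ?args (wit ?args k)) ` {0..<W}"
      by (auto simp: image_image hv Fk)
    also have "\<dots> = h ?args ` D" using wit[of ?args] by (simp add: image_image)
    also have "\<dots> = (\<lambda>d. eval ops imp D P F' (v(y := d)) A) ` D" by (simp add: hv)
    finally show ?thesis .
  qed
  have fsne: "map (\<lambda>f. subst1 y (Fn f (map Var xs)) A) fs \<noteq> []" using lenfs Wpos by auto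
  have top: "eval ops imp D P F' v S = top" if v: "range v \<subseteq> D" for v
  proof -
    have body: "eval ops imp D P F' v' (Imp (Ex y A) (bigOr (map (\<lambda>f. subst1 y (Fn f (map Var xs)) A) fs))) = top \<and>
      eval ops imp D P F' v' (Imp (bigAnd (map (\<lambda>f. subst1 y (Fn f (map Var xs)) A) fs)) (All y A)) = top"
      if v': "range v' \<subseteq> D" for v'
      using main[OF v'] imp_top_iff[OF lat] fsne by (simp add: eval_bigOr eval_bigAnd)
    show ?thesis using S
    proof
      assume "S = closeAll xs (Imp (Ex y A) (bigOr (map (\<lambda>f. subst1 y (Fn f (map Var xs)) A) fs)))"
      then show ?thesis using body v by (auto intro: eval_closeAll_intro)
    next
      assume "S = closeAll xs (Imp (bigAnd (map (\<lambda>f. subst1 y (Fn f (map Var xs)) A) fs)) (All y A))"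
      then show ?thesis using body v by (auto intro: eval_closeAll_intro)
    qed
  qed
  show ?thesis using st' agree top by blast
qed



lemma skax_seq_sat:
  fixes ops :: "'c \<Rightarrow> 'v::{finite,complete_lattice} list \<Rightarrow> 'v" and D :: "'u set"
    and F :: "'f \<Rightarrow> 'u list \<Rightarrow> 'u" and Ss :: "('c, 'p, 'f) fm list" and Fs :: "'f list list"
  assumes lat: "L_lattice ar pol ops imp" and st: "is_struct D F" and seq: "skax_seq W Ss Fs"
    and W: "W = card (UNIV :: 'v set)"
  shows "\<exists>F'. is_struct D F' \<and> (\<forall>f. (\<forall>fs\<in>set Fs. f \<notin> set fs) \<longrightarrow> F' f = F f) \<and>
      (\<forall>S\<in>set Ss. \<forall>v. range v \<subseteq> D \<longrightarrow> eval ops imp D P F' v S = top)"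
proof -
  have len: "length Ss = length Fs" and ax: "\<And>j. j < length Ss \<Longrightarrow> is_skax W (Ss ! j) (Fs ! j)"
    and dj: "\<And>j j'. j < length Ss \<Longrightarrow> j' < j \<Longrightarrow> set (Fs ! j) \<inter> funs (Ss ! j') = {}"
    using seq unfolding skax_seq_def by auto
  have "n \<le> length Ss \<Longrightarrow> \<exists>F'. is_struct D F' \<and> (\<forall>f. (\<forall>j<n. f \<notin> set (Fs ! j)) \<longrightarrow> F' f = F f) \<and>
      (\<forall>j<n. \<forall>v. range v \<subseteq> D \<longrightarrow> eval ops imp D P F' v (Ss ! j) = top)" for n
  proof (induction n)
    case 0 then show ?case using st by auto
  next
    case (Suc n)
    then obtain F1 where F1: "is_struct D F1" "\<forall>f. (\<forall>j<n. f \<notin> set (Fs ! j)) \<longrightarrow> F1 f = F f"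
      "\<forall>j<n. \<forall>v. range v \<subseteq> D \<longrightarrow> eval ops imp D P F1 v (Ss ! j) = top" by auto
    have n: "n < length Ss" using Suc.prems by simp
    obtain F2 where F2: "is_struct D F2" "\<forall>f. f \<notin> set (Fs ! n) \<longrightarrow> F2 f = F1 f"
      "\<forall>v. range v \<subseteq> D \<longrightarrow> eval ops imp D P F2 v (Ss ! n) = top"
      using skax_sat[OF lat F1(1) ax[OF n] W] by blast
    have "\<forall>j<Suc n. \<forall>v. range v \<subseteq> D \<longrightarrow> eval ops imp D P F2 v (Ss ! j) = top"
    proof (intro allI impI)
      fix j and v :: "nat \<Rightarrow> 'u" assume j: "j < Suc n" and v: "range v \<subseteq> D"
      show "eval ops imp D P F2 v (Ss ! j) = top"
      proof (cases "j = n")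
        case True then show ?thesis using F2(3) v by simp
      next
        case False
        then have jn: "j < n" using j by simp
        have "eval ops imp D P F2 v (Ss ! j) = eval ops imp D P F1 v (Ss ! j)"
          using F2(2) dj[OF n jn] by (intro eval_cong_F) auto
        then show ?thesis using F1(3) jn v by simp
      qed
    qed
    moreover have "\<forall>f. (\<forall>j<Suc n. f \<notin> set (Fs ! j)) \<longrightarrow> F2 f = F f"
      using F1(2) F2(2) by (metis less_Suc_eq)
    ultimately show ?case using F2(1) by blast
  qed
  from this[of "length Ss"] obtain F' where F': "is_struct D F'"
    "\<forall>f. (\<forall>j<length Ss. f \<notin> set (Fs ! j)) \<longrightarrow> F' f = F f"
    "\<forall>j<length Ss. \<forall>v. range v \<subseteq> D \<longrightarrow> eval ops imp D P F' v (Ss ! j) = top" by auto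
  have "\<forall>f. (\<forall>fs\<in>set Fs. f \<notin> set fs) \<longrightarrow> F' f = F f"
    using F'(2) len by (metis nth_mem)
  moreover have "\<forall>S\<in>set Ss. \<forall>v. range v \<subseteq> D \<longrightarrow> eval ops imp D P F' v S = top"
    using F'(3) by (metis in_set_conv_nth)
  ultimately show ?thesis using F'(1) by blast
qed

lemma part3:
  fixes ops :: "'c \<Rightarrow> 'v::{finite,complete_lattice} list \<Rightarrow> 'v"
    and Ss :: "('c, 'p, 'f) fm list" and Fs :: "'f list list" and A :: "('c, 'p, 'f) fm"
  assumes lat: "L_lattice ar pol ops imp"
    and seq: "skax_seq (card (UNIV :: 'v set)) Ss Fs" and dis: "\<forall>fs \<in> set Fs. set fs \<inter> funs A = {}"
    and ent: "entails ops imp TYPE('u) Ss A"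
  shows "valid ops imp TYPE('u) A"
  unfolding valid_def
proof (intro allI impI)
  fix D :: "'u set" and P :: "'p \<Rightarrow> 'u list \<Rightarrow> 'v" and F :: "'f \<Rightarrow> 'u list \<Rightarrow> 'u" and v :: "nat \<Rightarrow> 'u"
  assume a: "is_struct D F \<and> range v \<subseteq> D"
  obtain F' where F': "is_struct D F'" "\<forall>f. (\<forall>fs\<in>set Fs. f \<notin> set fs) \<longrightarrow> F' f = F f"
      "\<forall>S\<in>set Ss. \<forall>v. range v \<subseteq> D \<longrightarrow> eval ops imp D P F' v S = top"
    using skax_seq_sat[OF lat _ seq refl, of D F P] a by blast
  have "Inf ((\<lambda>C. eval ops imp D P F' v C) ` set Ss) = top" using F'(3) a by (simp add: INF_top_conv)
  then have "imp top (eval ops imp D P F' v A) = top" using ent F'(1) a unfolding entails_def by metis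
  then have "eval ops imp D P F' v A = top" using imp_top_iff[OF lat] top.extremum_unique by metis
  moreover have "eval ops imp D P F' v A = eval ops imp D P F v A"
    using F'(2) dis by (intro eval_cong_F) blast
  ultimately show "eval ops imp D P F v A = top" by simp
qed



definition axAll :: "'f list \<Rightarrow> nat \<Rightarrow> ('c, 'p, 'f) fm \<Rightarrow> ('c, 'p, 'f) fm" where
  "axAll fs x a = (let xs = sorted_list_of_set (fv (All x a))
     in closeAll xs (Imp (bigAnd (map (\<lambda>f. subst1 x (Fn f (map Var xs)) a) fs)) (All x a)))"

definition axEx :: "'f list \<Rightarrow> nat \<Rightarrow> ('c, 'p, 'f) fm \<Rightarrow> ('c, 'p, 'f) fm" where
  "axEx fs x a = (let xs = sorted_list_of_set (fv (Ex x a))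
     in closeAll xs (Imp (Ex x a) (bigOr (map (\<lambda>f. subst1 x (Fn f (map Var xs)) a) fs))))"

fun axs :: "('c \<Rightarrow> nat \<Rightarrow> bool) \<Rightarrow> nat \<Rightarrow> (nat list \<Rightarrow> nat \<Rightarrow> 'f) \<Rightarrow> bool \<Rightarrow> nat list \<Rightarrow>
    ('c, 'p, 'f) fm \<Rightarrow> (nat list \<times> ('c, 'p, 'f) fm) list"
and axss :: "('c \<Rightarrow> nat \<Rightarrow> bool) \<Rightarrow> nat \<Rightarrow> (nat list \<Rightarrow> nat \<Rightarrow> 'f) \<Rightarrow> bool \<Rightarrow> nat list \<Rightarrow>
    'c \<Rightarrow> nat \<Rightarrow> ('c, 'p, 'f) fm list \<Rightarrow> (nat list \<times> ('c, 'p, 'f) fm) list" where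
  "axs pol W nf p q (Atom P ts) = []"
| "axs pol W nf p q (Or a b) = axs pol W nf p (q @ [0]) a @ axs pol W nf p (q @ [1]) b"
| "axs pol W nf p q (And a b) = axs pol W nf p (q @ [0]) a @ axs pol W nf p (q @ [1]) b"
| "axs pol W nf p q (Imp a b) = axs pol W nf (\<not> p) (q @ [0]) a @ axs pol W nf p (q @ [1]) b"
| "axs pol W nf p q (Conn c as) = axss pol W nf p q c 0 as"
| "axs pol W nf p q (All x a) = axs pol W nf p (q @ [0]) a @
     (if p then [(q, axAll (map (nf q) [0..<W]) x (sk pol W nf p (q @ [0]) a))] else [])"
| "axs pol W nf p q (Ex x a) = axs pol W nf p (q @ [0]) a @
     (if \<not> p then [(q, axEx (map (nf q) [0..<W]) x (sk pol W nf p (q @ [0]) a))] else [])"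
| "axss pol W nf p q c i [] = []"
| "axss pol W nf p q c i (a # as) = axs pol W nf (pol c i = p) (q @ [i]) a @ axss pol W nf p q c (Suc i) as"

lemma spos_pos:
  fixes B :: "('c, 'p, 'f) fm" and as :: "('c, 'p, 'f) fm list"
  shows "r \<in> spos pol p q B \<Longrightarrow> \<exists>s. r = q @ s"
  "r \<in> sposs pol p q c i as \<Longrightarrow> \<exists>k s. i \<le> k \<and> r = q @ k # s"
proof (induction pol p q B and pol p q c i as arbitrary: r and r rule: spos_sposs.induct)
  case (9 pol p q c i a as)
  then show ?case by (fastforce split: if_splits dest: Suc_leD)
qed (fastforce split: if_splits)+

abbreviation nf2 :: "(nat list \<Rightarrow> nat \<Rightarrow> 'f) \<Rightarrow> nat list \<times> nat \<Rightarrow> 'f" where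
  "nf2 nf \<equiv> (\<lambda>(q, i). nf q i)"

lemma funs_sk:
  fixes B :: "('c, 'p, 'f) fm" and as :: "('c, 'p, 'f) fm list"
  shows "W > 0 \<Longrightarrow> funs (sk pol W nf p q B) \<subseteq> funs B \<union> nf2 nf ` (spos pol p q B \<times> {..<W})"
    "W > 0 \<Longrightarrow> funs (Conn c (sks pol W nf p q c i as)) \<subseteq> funs (Conn c as) \<union> nf2 nf ` (sposs pol p q c i as \<times> {..<W})"
proof (induction pol W nf p q B and pol W nf p q c i as rule: sk_sks.induct)
  case (6 pol W nf p q x a)
  let ?a' = "sk pol W nf p (q @ [0]) a"
  let ?xs = "sorted_list_of_set (fv (All x ?a'))"
  let ?L = "map (\<lambda>i. subst1 x (Fn (nf q i) (map Var ?xs)) ?a') [0..<W]"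
  have IH: "funs ?a' \<subseteq> funs a \<union> nf2 nf ` (spos pol p (q @ [0]) a \<times> {..<W})" using 6 by blast
  have L: "funs (bigAnd ?L) \<subseteq> funs ?a' \<union> nf2 nf ` ({q} \<times> {..<W})"
  proof -
    have "funs (subst1 x (Fn (nf q i) (map Var ?xs)) ?a') \<subseteq> funs ?a' \<union> nf2 nf ` ({q} \<times> {..<W})" if "i < W" for i
      using funs_subst1_Fn[of x "nf q i" ?xs ?a'] that by auto
    then show ?thesis using 6(2) by (simp add: funs_bigAnd UN_subset_iff)
  qed
  show ?case
  proof (cases "p")
    case True
    then have e1: "sk pol W nf p q (All x a) = bigAnd ?L" and e2: "spos pol p q (All x a) = insert q (spos pol p (q @ [0]) a)"
      by (simp_all add: Let_def)
    show ?thesis unfolding e1 e2 using IH L by auto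
  next
    case False
    then have e1: "sk pol W nf p q (All x a) = All x ?a'" and e2: "spos pol p q (All x a) = spos pol p (q @ [0]) a"
      by (simp_all add: Let_def)
    show ?thesis unfolding e1 e2 using IH by auto
  qed
next
  case (7 pol W nf p q x a)
  let ?a' = "sk pol W nf p (q @ [0]) a"
  let ?xs = "sorted_list_of_set (fv (Ex x ?a'))"
  let ?L = "map (\<lambda>i. subst1 x (Fn (nf q i) (map Var ?xs)) ?a') [0..<W]"
  have IH: "funs ?a' \<subseteq> funs a \<union> nf2 nf ` (spos pol p (q @ [0]) a \<times> {..<W})" using 7 by blast
  have L: "funs (bigOr ?L) \<subseteq> funs ?a' \<union> nf2 nf ` ({q} \<times> {..<W})"
  proof -
    have "funs (subst1 x (Fn (nf q i) (map Var ?xs)) ?a') \<subseteq> funs ?a' \<union> nf2 nf ` ({q} \<times> {..<W})" if "i < W" for i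
      using funs_subst1_Fn[of x "nf q i" ?xs ?a'] that by auto
    then show ?thesis using 7(2) by (simp add: funs_bigOr UN_subset_iff)
  qed
  show ?case
  proof (cases "\<not> p")
    case True
    then have e1: "sk pol W nf p q (Ex x a) = bigOr ?L" and e2: "spos pol p q (Ex x a) = insert q (spos pol p (q @ [0]) a)"
      by (simp_all add: Let_def)
    show ?thesis unfolding e1 e2 using IH L by auto
  next
    case False
    then have e1: "sk pol W nf p q (Ex x a) = Ex x ?a'" and e2: "spos pol p q (Ex x a) = spos pol p (q @ [0]) a"
      by (simp_all add: Let_def)
    show ?thesis unfolding e1 e2 using IH by auto
  qed
qed auto

lemma funs_axAll: "fs \<noteq> [] \<Longrightarrow> funs (axAll fs x a) \<subseteq> funs a \<union> set fs"
  unfolding axAll_def Let_def using funs_subst1_Fn by (fastforce simp: funs_bigAnd)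

lemma funs_axEx: "fs \<noteq> [] \<Longrightarrow> funs (axEx fs x a) \<subseteq> funs a \<union> set fs"
  unfolding axEx_def Let_def using funs_subst1_Fn by (fastforce simp: funs_bigOr)

lemma nf2_q: "set (map (nf q) [0..<W]) = nf2 nf ` ({q} \<times> {..<W})"
  by auto

lemma entries_mono:
  assumes "\<forall>e\<in>set L. fst e \<in> S1 \<and> funs (snd e) \<subseteq> G1 \<union> nf2 nf ` ({r\<in>S1. \<exists>s. r = fst e @ s} \<times> {..<W})"
    and "S1 \<subseteq> S2" and "G1 \<subseteq> G2"
  shows "\<forall>e\<in>set L. fst e \<in> S2 \<and> funs (snd e) \<subseteq> G2 \<union> nf2 nf ` ({r\<in>S2. \<exists>s. r = fst e @ s} \<times> {..<W})"
proof
  fix e assume e: "e \<in> set L"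
  have "{r\<in>S1. \<exists>s. r = fst e @ s} \<times> {..<W} \<subseteq> {r\<in>S2. \<exists>s. r = fst e @ s} \<times> {..<W}"
    using assms(2) by auto
  then have "nf2 nf ` ({r\<in>S1. \<exists>s. r = fst e @ s} \<times> {..<W}) \<subseteq> nf2 nf ` ({r\<in>S2. \<exists>s. r = fst e @ s} \<times> {..<W})"
    by (rule image_mono)
  then show "fst e \<in> S2 \<and> funs (snd e) \<subseteq> G2 \<union> nf2 nf ` ({r\<in>S2. \<exists>s. r = fst e @ s} \<times> {..<W})"
    using assms(1) e assms(2,3) by blast
qed

lemma axs_funs:
  fixes B :: "('c, 'p, 'f) fm" and as :: "('c, 'p, 'f) fm list"
  shows "W > 0 \<Longrightarrow> \<forall>e \<in> set (axs pol W nf p q B). fst e \<in> spos pol p q B \<and>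
      funs (snd e) \<subseteq> funs B \<union> nf2 nf ` ({r \<in> spos pol p q B. \<exists>s. r = fst e @ s} \<times> {..<W})"
    "W > 0 \<Longrightarrow> \<forall>e \<in> set (axss pol W nf p q c i as). fst e \<in> sposs pol p q c i as \<and>
      funs (snd e) \<subseteq> funs (Conn c as) \<union> nf2 nf ` ({r \<in> sposs pol p q c i as. \<exists>s. r = fst e @ s} \<times> {..<W})"
proof (induction pol W nf p q B and pol W nf p q c i as rule: axs_axss.induct)
  case (2 pol W nf p q a b)
  have h1: "\<forall>e\<in>set (axs pol W nf p (q @ [0]) a). fst e \<in> spos pol p q (Or a b) \<and>
     funs (snd e) \<subseteq> funs (Or a b) \<union> nf2 nf ` ({r\<in>spos pol p q (Or a b). \<exists>s. r = fst e @ s} \<times> {..<W})"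
    by (rule entries_mono[OF 2(1)[OF 2(3)]]) auto
  have h2: "\<forall>e\<in>set (axs pol W nf p (q @ [1]) b). fst e \<in> spos pol p q (Or a b) \<and>
     funs (snd e) \<subseteq> funs (Or a b) \<union> nf2 nf ` ({r\<in>spos pol p q (Or a b). \<exists>s. r = fst e @ s} \<times> {..<W})"
    by (rule entries_mono[OF 2(2)[OF 2(3)]]) auto
  have e: "axs pol W nf p q (Or a b) = axs pol W nf p (q @ [0]) a @ axs pol W nf p (q @ [1]) b" by simp
  show ?case unfolding e set_append ball_Un using h1 h2 by blast
next
  case (3 pol W nf p q a b)
  have h1: "\<forall>e\<in>set (axs pol W nf p (q @ [0]) a). fst e \<in> spos pol p q (And a b) \<and>
     funs (snd e) \<subseteq> funs (And a b) \<union> nf2 nf ` ({r\<in>spos pol p q (And a b). \<exists>s. r = fst e @ s} \<times> {..<W})"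
    by (rule entries_mono[OF 3(1)[OF 3(3)]]) auto
  have h2: "\<forall>e\<in>set (axs pol W nf p (q @ [1]) b). fst e \<in> spos pol p q (And a b) \<and>
     funs (snd e) \<subseteq> funs (And a b) \<union> nf2 nf ` ({r\<in>spos pol p q (And a b). \<exists>s. r = fst e @ s} \<times> {..<W})"
    by (rule entries_mono[OF 3(2)[OF 3(3)]]) auto
  have e: "axs pol W nf p q (And a b) = axs pol W nf p (q @ [0]) a @ axs pol W nf p (q @ [1]) b" by simp
  show ?case unfolding e set_append ball_Un using h1 h2 by blast
next
  case (4 pol W nf p q a b)
  have h1: "\<forall>e\<in>set (axs pol W nf (\<not> p) (q @ [0]) a). fst e \<in> spos pol p q (Imp a b) \<and>
     funs (snd e) \<subseteq> funs (Imp a b) \<union> nf2 nf ` ({r\<in>spos pol p q (Imp a b). \<exists>s. r = fst e @ s} \<times> {..<W})"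
    by (rule entries_mono[OF 4(1)[OF 4(3)]]) auto
  have h2: "\<forall>e\<in>set (axs pol W nf p (q @ [1]) b). fst e \<in> spos pol p q (Imp a b) \<and>
     funs (snd e) \<subseteq> funs (Imp a b) \<union> nf2 nf ` ({r\<in>spos pol p q (Imp a b). \<exists>s. r = fst e @ s} \<times> {..<W})"
    by (rule entries_mono[OF 4(2)[OF 4(3)]]) auto
  have e: "axs pol W nf p q (Imp a b) = axs pol W nf (\<not> p) (q @ [0]) a @ axs pol W nf p (q @ [1]) b" by simp
  show ?case unfolding e set_append ball_Un using h1 h2 by blast
next
  case (9 pol W nf p q c i a as)
  have h1: "\<forall>e\<in>set (axs pol W nf (pol c i = p) (q @ [i]) a). fst e \<in> sposs pol p q c i (a # as) \<and>
     funs (snd e) \<subseteq> funs (Conn c (a # as)) \<union> nf2 nf ` ({r\<in>sposs pol p q c i (a # as). \<exists>s. r = fst e @ s} \<times> {..<W})"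
    by (rule entries_mono[OF 9(1)[OF 9(3)]]) auto
  have h2: "\<forall>e\<in>set (axss pol W nf p q c (Suc i) as). fst e \<in> sposs pol p q c i (a # as) \<and>
     funs (snd e) \<subseteq> funs (Conn c (a # as)) \<union> nf2 nf ` ({r\<in>sposs pol p q c i (a # as). \<exists>s. r = fst e @ s} \<times> {..<W})"
    by (rule entries_mono[OF 9(2)[OF 9(3)]]) auto
  have e: "axss pol W nf p q c i (a # as) = axs pol W nf (pol c i = p) (q @ [i]) a @ axss pol W nf p q c (Suc i) as" by simp
  show ?case unfolding e set_append ball_Un using h1 h2 by blast
next
  case (6 pol W nf p q x a)
  let ?a' = "sk pol W nf p (q @ [0]) a"
  have old: "\<forall>e \<in> set (axs pol W nf p (q @ [0]) a). fst e \<in> spos pol p q (All x a) \<and>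
      funs (snd e) \<subseteq> funs (All x a) \<union> nf2 nf ` ({r \<in> spos pol p q (All x a). \<exists>s. r = fst e @ s} \<times> {..<W})"
    by (rule entries_mono[OF 6(1)[OF 6(2)]]) auto
  have new: "funs (axAll (map (nf q) [0..<W]) x ?a') \<subseteq> funs (All x a) \<union> nf2 nf ` ({r \<in> spos pol p q (All x a). \<exists>s. r = q @ s} \<times> {..<W})"
    if p: p
  proof -
    have "funs (axAll (map (nf q) [0..<W]) x ?a') \<subseteq> funs ?a' \<union> set (map (nf q) [0..<W])"
      using funs_axAll[of "map (nf q) [0..<W]" x ?a'] 6(2) by simp
    moreover have "set (map (nf q) [0..<W]) \<subseteq> nf2 nf ` ({r \<in> spos pol p q (All x a). \<exists>s. r = q @ s} \<times> {..<W})"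
      using p by auto
    moreover have "funs ?a' \<subseteq> funs a \<union> nf2 nf ` (spos pol p (q @ [0]) a \<times> {..<W})"
      using funs_sk(1)[OF 6(2)] .
    moreover have "\<forall>r\<in>spos pol p (q @ [0]) a. \<exists>s. r = q @ s"
    proof
      fix r assume "r \<in> spos pol p (q @ [0]) a"
      then obtain s where "r = (q @ [0]) @ s" using spos_pos(1) by blast
      then show "\<exists>s. r = q @ s" by auto
    qed
    then have "spos pol p (q @ [0]) a \<times> {..<W} \<subseteq> {r \<in> spos pol p q (All x a). \<exists>s. r = q @ s} \<times> {..<W}"
      by auto
    then have "nf2 nf ` (spos pol p (q @ [0]) a \<times> {..<W}) \<subseteq> nf2 nf ` ({r \<in> spos pol p q (All x a). \<exists>s. r = q @ s} \<times> {..<W})"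
      by (rule image_mono)
    moreover have "funs a \<subseteq> funs (All x a)" by simp
    ultimately show ?thesis by blast
  qed
  show ?case using old new by (cases p) auto
next
  case (7 pol W nf p q x a)
  let ?a' = "sk pol W nf p (q @ [0]) a"
  have old: "\<forall>e \<in> set (axs pol W nf p (q @ [0]) a). fst e \<in> spos pol p q (Ex x a) \<and>
      funs (snd e) \<subseteq> funs (Ex x a) \<union> nf2 nf ` ({r \<in> spos pol p q (Ex x a). \<exists>s. r = fst e @ s} \<times> {..<W})"
    by (rule entries_mono[OF 7(1)[OF 7(2)]]) auto
  have new: "funs (axEx (map (nf q) [0..<W]) x ?a') \<subseteq> funs (Ex x a) \<union> nf2 nf ` ({r \<in> spos pol p q (Ex x a). \<exists>s. r = q @ s} \<times> {..<W})"
    if p: "\<not> p"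
  proof -
    have "funs (axEx (map (nf q) [0..<W]) x ?a') \<subseteq> funs ?a' \<union> set (map (nf q) [0..<W])"
      using funs_axEx[of "map (nf q) [0..<W]" x ?a'] 7(2) by simp
    moreover have "set (map (nf q) [0..<W]) \<subseteq> nf2 nf ` ({r \<in> spos pol p q (Ex x a). \<exists>s. r = q @ s} \<times> {..<W})"
      using p by auto
    moreover have "funs ?a' \<subseteq> funs a \<union> nf2 nf ` (spos pol p (q @ [0]) a \<times> {..<W})"
      using funs_sk(1)[OF 7(2)] .
    moreover have "\<forall>r\<in>spos pol p (q @ [0]) a. \<exists>s. r = q @ s"
    proof
      fix r assume "r \<in> spos pol p (q @ [0]) a"
      then obtain s where "r = (q @ [0]) @ s" using spos_pos(1) by blast
      then show "\<exists>s. r = q @ s" by auto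
    qed
    then have "spos pol p (q @ [0]) a \<times> {..<W} \<subseteq> {r \<in> spos pol p q (Ex x a). \<exists>s. r = q @ s} \<times> {..<W}"
      by auto
    then have "nf2 nf ` (spos pol p (q @ [0]) a \<times> {..<W}) \<subseteq> nf2 nf ` ({r \<in> spos pol p q (Ex x a). \<exists>s. r = q @ s} \<times> {..<W})"
      by (rule image_mono)
    moreover have "funs a \<subseteq> funs (Ex x a)" by simp
    ultimately show ?thesis by blast
  qed
  show ?case using old new by (cases p) auto
qed auto



lemma axs_pos:
  fixes B :: "('c, 'p, 'f) fm" and as :: "('c, 'p, 'f) fm list"
  shows "\<forall>e \<in> set (axs pol W nf p q B). fst e \<in> spos pol p q B"
    "\<forall>e \<in> set (axss pol W nf p q c i as). fst e \<in> sposs pol p q c i as"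
  by (induction pol W nf p q B and pol W nf p q c i as rule: axs_axss.induct) force+

lemma axs_pre:
  fixes B :: "('c, 'p, 'f) fm" and as :: "('c, 'p, 'f) fm list"
  shows "e \<in> set (axs pol W nf p q B) \<Longrightarrow> \<exists>s. fst e = q @ s"
    "e \<in> set (axss pol W nf p q c i as) \<Longrightarrow> \<exists>k s. i \<le> k \<and> fst e = q @ k # s"
proof -
  show "e \<in> set (axs pol W nf p q B) \<Longrightarrow> \<exists>s. fst e = q @ s"
    using axs_pos(1) spos_pos(1) by blast
  assume "e \<in> set (axss pol W nf p q c i as)"
  then have "fst e \<in> sposs pol p q c i as" by (rule axs_pos(2)[rule_format])
  then show "\<exists>k s. i \<le> k \<and> fst e = q @ k # s" by (rule spos_pos(2))
qed

definition Rpos :: "nat list \<times> 'a \<Rightarrow> nat list \<times> 'a \<Rightarrow> bool" where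
  "Rpos x y \<longleftrightarrow> \<not> (\<exists>s. fst y = fst x @ s)"

lemma axs_sorted:
  fixes B :: "('c, 'p, 'f) fm" and as :: "('c, 'p, 'f) fm list"
  shows "sorted_wrt Rpos (axs pol W nf p q B)"
    "sorted_wrt Rpos (axss pol W nf p q c i as)"
proof (induction pol W nf p q B and pol W nf p q c i as rule: axs_axss.induct)
  case (2 pol W nf p q a b)
  have "Rpos x y" if hx: "x \<in> set (axs pol W nf p (q @ [0]) a)" and hy: "y \<in> set (axs pol W nf p (q @ [1]) b)" for x y
  proof -
    obtain s0 where "fst x = (q @ [0]) @ s0" using axs_pre(1)[OF hx] by blast
    then obtain s1 where s1: "fst x = q @ 0 # s1" by simp
    obtain s0 where "fst y = (q @ [1]) @ s0" using axs_pre(1)[OF hy] by blast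
    then obtain s2 where s2: "fst y = q @ 1 # s2" by simp
    show ?thesis unfolding Rpos_def using s1 s2 by auto
  qed
  then show ?case using 2 by (auto simp: sorted_wrt_append)
next
  case (3 pol W nf p q a b)
  have "Rpos x y" if hx: "x \<in> set (axs pol W nf p (q @ [0]) a)" and hy: "y \<in> set (axs pol W nf p (q @ [1]) b)" for x y
  proof -
    obtain s0 where "fst x = (q @ [0]) @ s0" using axs_pre(1)[OF hx] by blast
    then obtain s1 where s1: "fst x = q @ 0 # s1" by simp
    obtain s0 where "fst y = (q @ [1]) @ s0" using axs_pre(1)[OF hy] by blast
    then obtain s2 where s2: "fst y = q @ 1 # s2" by simp
    show ?thesis unfolding Rpos_def using s1 s2 by auto
  qed
  then show ?case using 3 by (auto simp: sorted_wrt_append)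
next
  case (4 pol W nf p q a b)
  have "Rpos x y" if hx: "x \<in> set (axs pol W nf (\<not> p) (q @ [0]) a)" and hy: "y \<in> set (axs pol W nf p (q @ [1]) b)" for x y
  proof -
    obtain s0 where "fst x = (q @ [0]) @ s0" using axs_pre(1)[OF hx] by blast
    then obtain s1 where s1: "fst x = q @ 0 # s1" by simp
    obtain s0 where "fst y = (q @ [1]) @ s0" using axs_pre(1)[OF hy] by blast
    then obtain s2 where s2: "fst y = q @ 1 # s2" by simp
    show ?thesis unfolding Rpos_def using s1 s2 by auto
  qed
  then show ?case using 4 by (auto simp: sorted_wrt_append)
next
  case (6 pol W nf p q x a)
  have "Rpos e (q, S)" if hx: "e \<in> set (axs pol W nf p (q @ [0]) a)" for e S
  proof -
    obtain s0 where "fst e = (q @ [0]) @ s0" using axs_pre(1)[OF hx] by blast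
    then obtain s1 where s1: "fst e = q @ 0 # s1" by simp
    show ?thesis unfolding Rpos_def using s1 by (auto dest: arg_cong[where f=length])
  qed
  then show ?case using 6 by (auto simp: sorted_wrt_append)
next
  case (7 pol W nf p q x a)
  have "Rpos e (q, S)" if hx: "e \<in> set (axs pol W nf p (q @ [0]) a)" for e S
  proof -
    obtain s0 where "fst e = (q @ [0]) @ s0" using axs_pre(1)[OF hx] by blast
    then obtain s1 where s1: "fst e = q @ 0 # s1" by simp
    show ?thesis unfolding Rpos_def using s1 by (auto dest: arg_cong[where f=length])
  qed
  then show ?case using 7 by (auto simp: sorted_wrt_append)
next
  case (9 pol W nf p q c i a as)
  have "Rpos x y" if hx: "x \<in> set (axs pol W nf (pol c i = p) (q @ [i]) a)" and hy: "y \<in> set (axss pol W nf p q c (Suc i) as)" for x y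
  proof -
    obtain s0 where "fst x = (q @ [i]) @ s0" using axs_pre(1)[OF hx] by blast
    then obtain s1 where s1: "fst x = q @ i # s1" by simp
    obtain k s2 where s2: "fst y = q @ k # s2" "Suc i \<le> k" using axs_pre(2)[OF hy] by blast
    show ?thesis unfolding Rpos_def using s1 s2 by auto
  qed
  then show ?case using 9 by (auto simp: sorted_wrt_append)
qed auto

lemma skax_new:
  assumes inj: "inj_on (nf2 nf) (N \<times> {..<W})" and fresh: "\<forall>r\<in>N. \<forall>i<W. nf r i \<notin> G"
    and W: "W > 0" and qN: "q \<in> N" and subN: "spos pol p (q @ [0]) a \<subseteq> N" and fa: "funs a \<subseteq> G"
  shows "set (map (nf q) [0..<W]) \<inter> funs (sk pol W nf p (q @ [0]) a) = {}"
    and "distinct (map (nf q) [0..<W])"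
proof -
  show "distinct (map (nf q) [0..<W])"
  proof (rule distinct_map[THEN iffD2], intro conjI)
    show "inj_on (nf q) (set [0..<W])"
      using inj qN unfolding inj_on_def by auto
  qed simp
  show "set (map (nf q) [0..<W]) \<inter> funs (sk pol W nf p (q @ [0]) a) = {}"
  proof (rule ccontr)
    assume "set (map (nf q) [0..<W]) \<inter> funs (sk pol W nf p (q @ [0]) a) \<noteq> {}"
    then obtain i where i: "i < W" and f: "nf q i \<in> funs (sk pol W nf p (q @ [0]) a)" by auto
    have "funs (sk pol W nf p (q @ [0]) a) \<subseteq> funs a \<union> nf2 nf ` (spos pol p (q @ [0]) a \<times> {..<W})"
      by (rule funs_sk(1)[OF W])
    with f have "nf q i \<in> funs a \<union> nf2 nf ` (spos pol p (q @ [0]) a \<times> {..<W})" by blast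
    then show False
    proof
      assume "nf q i \<in> funs a" then show False using fa fresh qN i by blast
    next
      assume "nf q i \<in> nf2 nf ` (spos pol p (q @ [0]) a \<times> {..<W})"
      then obtain r j where r: "r \<in> spos pol p (q @ [0]) a" and j: "j < W" and e: "nf q i = nf r j" by auto
      have "(q, i) = (r, j)" using inj qN i r j e subN unfolding inj_on_def by auto
      moreover obtain s where "r = (q @ [0]) @ s" using spos_pos(1)[OF r] by blast
      ultimately show False by (auto dest: arg_cong[where f=length])
    qed
  qed
qed

lemma axs_skax:
  fixes B :: "('c, 'p, 'f) fm" and as :: "('c, 'p, 'f) fm list"
  shows "inj_on (nf2 nf) (N \<times> {..<W}) \<Longrightarrow> (\<forall>r\<in>N. \<forall>i<W. nf r i \<notin> G) \<Longrightarrow> W > 0 \<Longrightarrow>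
      spos pol p q B \<subseteq> N \<Longrightarrow> funs B \<subseteq> G \<Longrightarrow>
      \<forall>e\<in>set (axs pol W nf p q B). is_skax W (snd e) (map (nf (fst e)) [0..<W])"
    "inj_on (nf2 nf) (N \<times> {..<W}) \<Longrightarrow> (\<forall>r\<in>N. \<forall>i<W. nf r i \<notin> G) \<Longrightarrow> W > 0 \<Longrightarrow>
      sposs pol p q c i as \<subseteq> N \<Longrightarrow> funs (Conn c as) \<subseteq> G \<Longrightarrow>
      \<forall>e\<in>set (axss pol W nf p q c i as). is_skax W (snd e) (map (nf (fst e)) [0..<W])"
proof (induction pol W nf p q B and pol W nf p q c i as rule: axs_axss.induct)
  case (6 pol W nf p q x a)
  let ?a' = "sk pol W nf p (q @ [0]) a"
  let ?fs = "map (nf q) [0..<W]"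
  have old: "\<forall>e\<in>set (axs pol W nf p (q @ [0]) a). is_skax W (snd e) (map (nf (fst e)) [0..<W])"
    using 6 by auto
  have new: "is_skax W (axAll ?fs x ?a') ?fs" if p: p
  proof -
    have qN: "q \<in> N" using 6(5) p by simp
    have subN: "spos pol p (q @ [0]) a \<subseteq> N" using 6(5) by auto
    have fa: "funs a \<subseteq> G" using 6(6) by simp
    note sn = skax_new[OF 6(2) 6(3) 6(4) qN subN fa]
    let ?xs = "sorted_list_of_set (fv (All x ?a'))"
    have "length ?fs = W \<and> distinct ?fs \<and> set ?fs \<inter> funs ?a' = {} \<and>
        distinct ?xs \<and> x \<notin> set ?xs \<and> fv ?a' \<subseteq> insert x (set ?xs) \<and>
        (axAll ?fs x ?a' = closeAll ?xs (Imp (Ex x ?a')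
               (bigOr (map (\<lambda>f. subst1 x (Fn f (map Var ?xs)) ?a') ?fs))) \<or>
         axAll ?fs x ?a' = closeAll ?xs (Imp (bigAnd (map (\<lambda>f. subst1 x (Fn f (map Var ?xs)) ?a') ?fs))
               (All x ?a')))"
      using sn by (auto simp: axAll_def Let_def)
    then show ?thesis unfolding is_skax_def by blast
  qed
  show ?case using old new by (cases p) auto
next
  case (7 pol W nf p q x a)
  let ?a' = "sk pol W nf p (q @ [0]) a"
  let ?fs = "map (nf q) [0..<W]"
  have old: "\<forall>e\<in>set (axs pol W nf p (q @ [0]) a). is_skax W (snd e) (map (nf (fst e)) [0..<W])"
    using 7 by auto
  have new: "is_skax W (axEx ?fs x ?a') ?fs" if p: "\<not> p"
  proof -
    have qN: "q \<in> N" using 7(5) p by simp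
    have subN: "spos pol p (q @ [0]) a \<subseteq> N" using 7(5) by auto
    have fa: "funs a \<subseteq> G" using 7(6) by simp
    note sn = skax_new[OF 7(2) 7(3) 7(4) qN subN fa]
    let ?xs = "sorted_list_of_set (fv (Ex x ?a'))"
    have "length ?fs = W \<and> distinct ?fs \<and> set ?fs \<inter> funs ?a' = {} \<and>
        distinct ?xs \<and> x \<notin> set ?xs \<and> fv ?a' \<subseteq> insert x (set ?xs) \<and>
        (axEx ?fs x ?a' = closeAll ?xs (Imp (Ex x ?a')
               (bigOr (map (\<lambda>f. subst1 x (Fn f (map Var ?xs)) ?a') ?fs))) \<or>
         axEx ?fs x ?a' = closeAll ?xs (Imp (bigAnd (map (\<lambda>f. subst1 x (Fn f (map Var ?xs)) ?a') ?fs))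
               (All x ?a')))"
      using sn by (auto simp: axEx_def Let_def)
    then show ?thesis unfolding is_skax_def by blast
  qed
  show ?case using old new by (cases p) auto
qed auto



lemma range_upd: "range v \<subseteq> D \<Longrightarrow> d \<in> D \<Longrightarrow> range (v(x := d)) \<subseteq> D"
  by auto

lemma sk_eq:
  fixes B :: "('c, 'p, 'f) fm" and as :: "('c, 'p, 'f) fm list" and D :: "'u set"
    and ops :: "'c \<Rightarrow> 'v::complete_lattice list \<Rightarrow> 'v"
  shows "W > 0 \<Longrightarrow> is_struct D F \<Longrightarrow> (\<forall>a b. (imp a b = top) = (a \<le> b)) \<Longrightarrow>
    (\<forall>e\<in>set (axs pol W nf p q B). \<forall>v. range v \<subseteq> D \<longrightarrow> eval ops imp D P F v (snd e) = top) \<Longrightarrow>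
    \<forall>v. range v \<subseteq> D \<longrightarrow> eval ops imp D P F v (sk pol W nf p q B) = eval ops imp D P F v B"
  and "W > 0 \<Longrightarrow> is_struct D F \<Longrightarrow> (\<forall>a b. (imp a b = top) = (a \<le> b)) \<Longrightarrow>
    (\<forall>e\<in>set (axss pol W nf p q c i as). \<forall>v. range v \<subseteq> D \<longrightarrow> eval ops imp D P F v (snd e) = top) \<Longrightarrow>
    \<forall>v. range v \<subseteq> D \<longrightarrow> map (eval ops imp D P F v) (sks pol W nf p q c i as) = map (eval ops imp D P F v) as"
proof (induction pol W nf p q B and pol W nf p q c i as rule: axs_axss.induct)
  case (2 pol W nf p q a b)
  have a1: "\<forall>e\<in>set (axs pol W nf p (q @ [0]) a). \<forall>v. range v \<subseteq> D \<longrightarrow> eval ops imp D P F v (snd e) = top"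
    using "2.prems"(4) by simp
  have a2: "\<forall>e\<in>set (axs pol W nf p (q @ [1]) b). \<forall>v. range v \<subseteq> D \<longrightarrow> eval ops imp D P F v (snd e) = top"
    using "2.prems"(4) by simp
  note i1 = "2.IH"(1)[OF "2.prems"(1-3) a1] and i2 = "2.IH"(2)[OF "2.prems"(1-3) a2]
  show ?case by (intro allI impI, simp add: i1[rule_format, simplified] i2[rule_format, simplified])
next
  case (3 pol W nf p q a b)
  have a1: "\<forall>e\<in>set (axs pol W nf p (q @ [0]) a). \<forall>v. range v \<subseteq> D \<longrightarrow> eval ops imp D P F v (snd e) = top"
    using "3.prems"(4) by simp
  have a2: "\<forall>e\<in>set (axs pol W nf p (q @ [1]) b). \<forall>v. range v \<subseteq> D \<longrightarrow> eval ops imp D P F v (snd e) = top"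
    using "3.prems"(4) by simp
  note i1 = "3.IH"(1)[OF "3.prems"(1-3) a1] and i2 = "3.IH"(2)[OF "3.prems"(1-3) a2]
  show ?case by (intro allI impI, simp add: i1[rule_format, simplified] i2[rule_format, simplified])
next
  case (4 pol W nf p q a b)
  have a1: "\<forall>e\<in>set (axs pol W nf (\<not> p) (q @ [0]) a). \<forall>v. range v \<subseteq> D \<longrightarrow> eval ops imp D P F v (snd e) = top"
    using "4.prems"(4) by simp
  have a2: "\<forall>e\<in>set (axs pol W nf p (q @ [1]) b). \<forall>v. range v \<subseteq> D \<longrightarrow> eval ops imp D P F v (snd e) = top"
    using "4.prems"(4) by simp
  note i1 = "4.IH"(1)[OF "4.prems"(1-3) a1] and i2 = "4.IH"(2)[OF "4.prems"(1-3) a2]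
  show ?case by (intro allI impI, simp add: i1[rule_format, simplified] i2[rule_format, simplified])
next
  case (9 pol W nf p q c i a as)
  have a1: "\<forall>e\<in>set (axs pol W nf (pol c i = p) (q @ [i]) a). \<forall>v. range v \<subseteq> D \<longrightarrow> eval ops imp D P F v (snd e) = top"
    using "9.prems"(4) by simp
  have a2: "\<forall>e\<in>set (axss pol W nf p q c (Suc i) as). \<forall>v. range v \<subseteq> D \<longrightarrow> eval ops imp D P F v (snd e) = top"
    using "9.prems"(4) by simp
  note i1 = "9.IH"(1)[OF "9.prems"(1-3) a1] and i2 = "9.IH"(2)[OF "9.prems"(1-3) a2]
  show ?case by (intro allI impI, simp add: i1[rule_format, simplified] i2[rule_format, simplified])
next
  case (5 pol W nf p q c as)
  have a1: "\<forall>e\<in>set (axss pol W nf p q c 0 as). \<forall>v. range v \<subseteq> D \<longrightarrow> eval ops imp D P F v (snd e) = top"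
    using "5.prems"(4) by simp
  note i1 = "5.IH"[OF "5.prems"(1-3) a1]
  show ?case by (intro allI impI, simp add: i1[rule_format])
next
  case (1 pol W nf p q P ts) show ?case by simp
next
  case (8 pol W nf p q c i) show ?case by simp
next
  case (6 pol W nf p q x a)
  let ?a' = "sk pol W nf p (q @ [0]) a"
  let ?fs = "map (nf q) [0..<W]"
  let ?xs = "sorted_list_of_set (fv (All x ?a'))"
  have IH: "\<forall>v. range v \<subseteq> D \<longrightarrow> eval ops imp D P F v ?a' = eval ops imp D P F v a"
  proof -
    have "\<forall>e\<in>set (axs pol W nf p (q @ [0]) a). \<forall>v. range v \<subseteq> D \<longrightarrow> eval ops imp D P F v (snd e) = top"
      using "6.prems"(4) by simp
    then show ?thesis by (rule "6.IH"[OF "6.prems"(1-3)])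
  qed
  have allq: "eval ops imp D P F v (All x ?a') = eval ops imp D P F v (All x a)" if v: "range v \<subseteq> D" for v
  proof -
    have "\<And>d. d \<in> D \<Longrightarrow> eval ops imp D P F (v(x := d)) ?a' = eval ops imp D P F (v(x := d)) a"
      by (rule IH[rule_format, OF range_upd[OF v]])
    then show ?thesis by (auto intro!: arg_cong[where f=Inf] image_cong)
  qed
  show ?case
  proof (cases p)
    case False
    then show ?thesis using allq by (simp add: Let_def)
  next
    case True
    have ax: "\<forall>v. range v \<subseteq> D \<longrightarrow> eval ops imp D P F v (axAll ?fs x ?a') = top"
      using "6.prems"(4) True by simp
    show ?thesis
    proof (intro allI impI)
      fix v :: "nat \<Rightarrow> 'u" assume v: "range v \<subseteq> D"
      let ?L = "map (\<lambda>i. subst1 x (Fn (nf q i) (map Var ?xs)) ?a') [0..<W]"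
      have sk: "sk pol W nf p q (All x a) = bigAnd ?L" using True by (simp add: Let_def)
      have L: "map (\<lambda>f. subst1 x (Fn f (map Var ?xs)) ?a') ?fs = ?L" by simp
      have axeq: "axAll ?fs x ?a' = closeAll ?xs (Imp (bigAnd ?L) (All x ?a'))"
        unfolding axAll_def Let_def L ..
      have "eval ops imp D P F v (closeAll ?xs (Imp (bigAnd ?L) (All x ?a'))) = top"
        using ax v unfolding axeq by blast
      from eval_closeAll_top[OF this v]
      have "eval ops imp D P F v (Imp (bigAnd ?L) (All x ?a')) = top" .
      then have le1: "eval ops imp D P F v (bigAnd ?L) \<le> eval ops imp D P F v (All x ?a')"
        using "6.prems"(3) by simp
      have "eval ops imp D P F v (bigAnd ?L) = (INF i\<in>{0..<W}. eval ops imp D P F (v(x := F (nf q i) (map v ?xs))) ?a')"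
        using "6.prems"(1) by (rule eval_skAll)
      also have "\<dots> \<ge> eval ops imp D P F v (All x ?a')"
      proof (rule INF_greatest)
        fix i assume "i \<in> {0..<W}"
        show "eval ops imp D P F v (All x ?a') \<le> eval ops imp D P F (v(x := F (nf q i) (map v ?xs))) ?a'"
          unfolding eval.simps by (rule INF_lower[OF Fn_in_D[OF "6.prems"(2) v]])
      qed
      finally have "eval ops imp D P F v (bigAnd ?L) = eval ops imp D P F v (All x ?a')"
        using le1 by (rule antisym[rotated])
      then show "eval ops imp D P F v (sk pol W nf p q (All x a)) = eval ops imp D P F v (All x a)"
        unfolding sk using allq[OF v] by simp
    qed
  qed
next
  case (7 pol W nf p q x a)
  let ?a' = "sk pol W nf p (q @ [0]) a"
  let ?fs = "map (nf q) [0..<W]"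
  let ?xs = "sorted_list_of_set (fv (Ex x ?a'))"
  have IH: "\<forall>v. range v \<subseteq> D \<longrightarrow> eval ops imp D P F v ?a' = eval ops imp D P F v a"
  proof -
    have "\<forall>e\<in>set (axs pol W nf p (q @ [0]) a). \<forall>v. range v \<subseteq> D \<longrightarrow> eval ops imp D P F v (snd e) = top"
      using "7.prems"(4) by simp
    then show ?thesis by (rule "7.IH"[OF "7.prems"(1-3)])
  qed
  have exq: "eval ops imp D P F v (Ex x ?a') = eval ops imp D P F v (Ex x a)" if v: "range v \<subseteq> D" for v
  proof -
    have "\<And>d. d \<in> D \<Longrightarrow> eval ops imp D P F (v(x := d)) ?a' = eval ops imp D P F (v(x := d)) a"
      by (rule IH[rule_format, OF range_upd[OF v]])
    then show ?thesis by (auto intro!: arg_cong[where f=Sup] image_cong)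
  qed
  show ?case
  proof (cases p)
    case True
    then show ?thesis using exq by (simp add: Let_def)
  next
    case False
    have ax: "\<forall>v. range v \<subseteq> D \<longrightarrow> eval ops imp D P F v (axEx ?fs x ?a') = top"
      using "7.prems"(4) False by simp
    show ?thesis
    proof (intro allI impI)
      fix v :: "nat \<Rightarrow> 'u" assume v: "range v \<subseteq> D"
      let ?L = "map (\<lambda>i. subst1 x (Fn (nf q i) (map Var ?xs)) ?a') [0..<W]"
      have sk: "sk pol W nf p q (Ex x a) = bigOr ?L" using False by (simp add: Let_def)
      have L: "map (\<lambda>f. subst1 x (Fn f (map Var ?xs)) ?a') ?fs = ?L" by simp
      have axeq: "axEx ?fs x ?a' = closeAll ?xs (Imp (Ex x ?a') (bigOr ?L))"
        unfolding axEx_def Let_def L ..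
      have "eval ops imp D P F v (closeAll ?xs (Imp (Ex x ?a') (bigOr ?L))) = top"
        using ax v unfolding axeq by blast
      from eval_closeAll_top[OF this v]
      have "eval ops imp D P F v (Imp (Ex x ?a') (bigOr ?L)) = top" .
      then have le1: "eval ops imp D P F v (Ex x ?a') \<le> eval ops imp D P F v (bigOr ?L)"
        using "7.prems"(3) by simp
      have "eval ops imp D P F v (bigOr ?L) = (SUP i\<in>{0..<W}. eval ops imp D P F (v(x := F (nf q i) (map v ?xs))) ?a')"
        using "7.prems"(1) by (rule eval_skEx)
      also have "\<dots> \<le> eval ops imp D P F v (Ex x ?a')"
      proof (rule SUP_least)
        fix i assume "i \<in> {0..<W}"
        show "eval ops imp D P F (v(x := F (nf q i) (map v ?xs))) ?a' \<le> eval ops imp D P F v (Ex x ?a')"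
          unfolding eval.simps by (rule SUP_upper[OF Fn_in_D[OF "7.prems"(2) v]])
      qed
      finally have "eval ops imp D P F v (bigOr ?L) = eval ops imp D P F v (Ex x ?a')"
        using le1 by (rule antisym)
      then show "eval ops imp D P F v (sk pol W nf p q (Ex x a)) = eval ops imp D P F v (Ex x a)"
        unfolding sk using exq[OF v] by simp
    qed
  qed
qed



lemma funs_fill: "funs X \<subseteq> funs (fill C X)"
  by (induction C) auto

theorem mainTheorem13:
  fixes ar :: "'c::finite \<Rightarrow> nat" and pol :: "'c \<Rightarrow> nat \<Rightarrow> bool"
    and ops :: "'c \<Rightarrow> 'v::{finite,complete_lattice} list \<Rightarrow> 'v"
    and imp :: "'v \<Rightarrow> 'v \<Rightarrow> 'v"
    and Cx :: "('c, 'p, 'f) ctx" and B :: "('c, 'p, 'f) fm"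
    and nf :: "nat list \<Rightarrow> nat \<Rightarrow> 'f"
  assumes lat: "L_lattice ar pol ops imp"
    and wff: "wf ar (fill Cx B)"
    and nobind: "cbound Cx \<inter> fv B = {}"
    and new_inj: "inj_on (\<lambda>(q, i). nf q i) (spos pol (cpol pol Cx) [] B \<times> {..<card (UNIV :: 'v set)})"
    and new_fresh: "\<forall>q \<in> spos pol (cpol pol Cx) [] B. \<forall>i < card (UNIV :: 'v set). nf q i \<notin> funs (fill Cx B)"
  shows
    "(valid ops imp TYPE('u) (fill Cx B) \<longrightarrow>
        valid ops imp TYPE('u) (fill Cx (sk pol (card (UNIV :: 'v set)) nf (cpol pol Cx) [] B)))
     \<and> (\<exists>Ss Fs. skax_seq (card (UNIV :: 'v set)) Ss Fs \<and>
          (\<forall>fs \<in> set Fs. set fs \<subseteq> (\<lambda>(q, i). nf q i) ` (spos pol (cpol pol Cx) [] B \<times> {..<card (UNIV :: 'v set)})) \<and>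
          (entails ops imp TYPE('u) Ss (fill Cx (sk pol (card (UNIV :: 'v set)) nf (cpol pol Cx) [] B)) \<longrightarrow>
           entails ops imp TYPE('u) Ss (fill Cx B)))
     \<and> (\<forall>Ss Fs (A :: ('c, 'p, 'f) fm). skax_seq (card (UNIV :: 'v set)) Ss Fs \<and> (\<forall>fs \<in> set Fs. set fs \<inter> funs A = {}) \<and>
          entails ops imp TYPE('u) Ss A \<longrightarrow> valid ops imp TYPE('u) A)"
proof -
  let ?W = "card (UNIV :: 'v set)"
  let ?p = "cpol pol Cx"
  let ?N = "spos pol ?p [] B"
  let ?G = "funs (fill Cx B)"
  let ?skB = "sk pol ?W nf ?p [] B"
  have Wpos: "?W > 0" by (simp add: finite_UNIV_card_ge_0)
  have cw: "cwf ar Cx" and wB: "wf ar B" using wf_fill[OF wff] by auto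
  have impiff: "\<forall>a b. (imp a b = top) = (a \<le> b)" using imp_top_iff[OF lat] by blast
  have P1: "valid ops imp TYPE('u) (fill Cx B) \<longrightarrow> valid ops imp TYPE('u) (fill Cx ?skB)"
  proof
    assume val: "valid ops imp TYPE('u) (fill Cx B)"
    show "valid ops imp TYPE('u) (fill Cx ?skB)"
      unfolding valid_def
    proof (intro allI impI)
      fix D :: "'u set" and P :: "'p \<Rightarrow> 'u list \<Rightarrow> 'v" and F :: "'f \<Rightarrow> 'u list \<Rightarrow> 'u" and v :: "nat \<Rightarrow> 'u"
      assume a: "is_struct D F \<and> range v \<subseteq> D"
      have st: "is_struct D F" and rv: "range v \<subseteq> D" using a by auto
      have mono: "\<And>v. range v \<subseteq> D \<Longrightarrow> (if cpol pol Cx then eval ops imp D P F v B \<le> eval ops imp D P F v ?skB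
          else eval ops imp D P F v ?skB \<le> eval ops imp D P F v B)"
        by (rule sk_mono[OF lat st Wpos wB])
      have "eval ops imp D P F v (fill Cx B) \<le> eval ops imp D P F v (fill Cx ?skB)"
        by (rule ctx_mono[OF lat cw mono rv])
      moreover have "eval ops imp D P F v (fill Cx B) = top"
        using val[unfolded valid_def, rule_format, OF conjI[OF st rv]] .
      ultimately show "eval ops imp D P F v (fill Cx ?skB) = top" by (simp add: top_unique)
    qed
  qed
  define L where "L = axs pol ?W nf ?p [] B"
  define Ss where "Ss = map snd L"
  define Fs where "Fs = map (\<lambda>e. map (nf (fst e)) [0..<?W]) L"
  have inj: "inj_on (nf2 nf) (?N \<times> {..<?W})" using new_inj by simp
  have fresh: "\<forall>r\<in>?N. \<forall>i<?W. nf r i \<notin> ?G" using new_fresh by blast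
  have fB: "funs B \<subseteq> ?G" by (rule funs_fill)
  have skax: "\<forall>e\<in>set L. is_skax ?W (snd e) (map (nf (fst e)) [0..<?W])"
    unfolding L_def by (rule axs_skax(1)[OF inj fresh Wpos subset_refl fB])
  have sorted: "sorted_wrt Rpos L" unfolding L_def by (rule axs_sorted(1))
  have funsL: "\<forall>e\<in>set L. fst e \<in> ?N \<and> funs (snd e) \<subseteq> funs B \<union> nf2 nf ` ({r \<in> ?N. \<exists>s. r = fst e @ s} \<times> {..<?W})"
    unfolding L_def by (rule axs_funs(1)[OF Wpos])
  have seq: "skax_seq ?W Ss Fs"
    unfolding skax_seq_def
  proof (intro conjI allI impI)
    show "length Ss = length Fs" unfolding Ss_def Fs_def by simp
  next
    fix j assume j: "j < length Ss"
    then have jL: "j < length L" unfolding Ss_def by simp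
    then have "L ! j \<in> set L" by simp
    then show "is_skax ?W (Ss ! j) (Fs ! j)" using skax jL unfolding Ss_def Fs_def by simp
  next
    fix j j' assume j: "j < length Ss" and j': "j' < j"
    then have jL: "j < length L" and jL': "j' < length L" unfolding Ss_def by auto
    have R: "Rpos (L ! j') (L ! j)" using sorted jL j' by (simp add: sorted_wrt_iff_nth_less)
    have ej: "fst (L ! j) \<in> ?N" using funsL jL by (meson nth_mem)
    have fj': "funs (snd (L ! j')) \<subseteq> funs B \<union> nf2 nf ` ({r \<in> ?N. \<exists>s. r = fst (L ! j') @ s} \<times> {..<?W})"
      using funsL jL' by (meson nth_mem)
    show "set (Fs ! j) \<inter> funs (Ss ! j') = {}"
    proof (rule ccontr)
      assume "set (Fs ! j) \<inter> funs (Ss ! j') \<noteq> {}"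
      then obtain i where i: "i < ?W" and f: "nf (fst (L ! j)) i \<in> funs (snd (L ! j'))"
        unfolding Fs_def Ss_def using jL jL' by auto
      from f fj' have "nf (fst (L ! j)) i \<in> funs B \<or> nf (fst (L ! j)) i \<in> nf2 nf ` ({r \<in> ?N. \<exists>s. r = fst (L ! j') @ s} \<times> {..<?W})"
        by blast
      then show False
      proof
        assume "nf (fst (L ! j)) i \<in> funs B"
        then show False using fB fresh ej i by blast
      next
        assume "nf (fst (L ! j)) i \<in> nf2 nf ` ({r \<in> ?N. \<exists>s. r = fst (L ! j') @ s} \<times> {..<?W})"
        then obtain r k where r: "r \<in> ?N" "\<exists>s. r = fst (L ! j') @ s" and k: "k < ?W"
          and e: "nf (fst (L ! j)) i = nf r k" by auto
        have "(fst (L ! j), i) = (r, k)" using inj ej i r k e unfolding inj_on_def by auto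
        then show False using R r unfolding Rpos_def by auto
      qed
    qed
  qed
  have Fsub: "\<forall>fs \<in> set Fs. set fs \<subseteq> (\<lambda>(q, i). nf q i) ` (?N \<times> {..<?W})"
    unfolding Fs_def using funsL by auto
  have ent: "entails ops imp TYPE('u) Ss (fill Cx ?skB) \<longrightarrow> entails ops imp TYPE('u) Ss (fill Cx B)"
  proof
    assume ent: "entails ops imp TYPE('u) Ss (fill Cx ?skB)"
    show "entails ops imp TYPE('u) Ss (fill Cx B)"
      unfolding entails_def
    proof (intro allI impI)
      fix D :: "'u set" and P :: "'p \<Rightarrow> 'u list \<Rightarrow> 'v" and F :: "'f \<Rightarrow> 'u list \<Rightarrow> 'u" and v :: "nat \<Rightarrow> 'u"
      assume a: "is_struct D F \<and> range v \<subseteq> D"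
      obtain F' where F': "is_struct D F'" "\<forall>f. (\<forall>fs\<in>set Fs. f \<notin> set fs) \<longrightarrow> F' f = F f"
          "\<forall>S\<in>set Ss. \<forall>v. range v \<subseteq> D \<longrightarrow> eval ops imp D P F' v S = top"
        using skax_seq_sat[OF lat _ seq refl, of D F P] a by blast
      have "Inf ((\<lambda>C. eval ops imp D P F' v C) ` set Ss) = top" using F'(3) a by (simp add: INF_top_conv)
      then have "imp top (eval ops imp D P F' v (fill Cx ?skB)) = top" using ent F'(1) a unfolding entails_def by metis
      then have t1: "eval ops imp D P F' v (fill Cx ?skB) = top" using impiff top.extremum_unique by metis
      have axt: "\<forall>e\<in>set L. \<forall>v. range v \<subseteq> D \<longrightarrow> eval ops imp D P F' v (snd e) = top"
      proof
        fix e assume "e \<in> set L"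
        then have "snd e \<in> set Ss" unfolding Ss_def by simp
        then show "\<forall>v. range v \<subseteq> D \<longrightarrow> eval ops imp D P F' v (snd e) = top" using F'(3) by blast
      qed
      have eqB: "\<forall>v. range v \<subseteq> D \<longrightarrow> eval ops imp D P F' v ?skB = eval ops imp D P F' v B"
        using axt unfolding L_def by (rule sk_eq(1)[OF Wpos F'(1) impiff])
      have "eval ops imp D P F' v (fill Cx ?skB) = eval ops imp D P F' v (fill Cx B)"
      proof -
        have "\<And>v. range v \<subseteq> D \<Longrightarrow> eval ops imp D P F' v ?skB = eval ops imp D P F' v B" using eqB by blast
        moreover have "range v \<subseteq> D" using a by blast
        ultimately show ?thesis by (rule ctx_cong)
      qed
      moreover have "eval ops imp D P F' v (fill Cx B) = eval ops imp D P F v (fill Cx B)"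
      proof (rule eval_cong_F, intro ballI)
        fix f assume f: "f \<in> funs (fill Cx B)"
        have "\<forall>fs\<in>set Fs. f \<notin> set fs"
        proof
          fix fs assume "fs \<in> set Fs"
          then have "set fs \<subseteq> nf2 nf ` (?N \<times> {..<?W})" using Fsub by blast
          then show "f \<notin> set fs" using f fresh by auto
        qed
        then show "F' f = F f" using F'(2) by blast
      qed
      ultimately have "eval ops imp D P F v (fill Cx B) = top" using t1 by simp
      then show "imp (Inf ((\<lambda>C. eval ops imp D P F v C) ` set Ss)) (eval ops imp D P F v (fill Cx B)) = top"
        using impiff by simp
    qed
  qed
  have P2: "\<exists>Ss Fs. skax_seq ?W Ss Fs \<and>
          (\<forall>fs \<in> set Fs. set fs \<subseteq> (\<lambda>(q, i). nf q i) ` (?N \<times> {..<?W})) \<and>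
          (entails ops imp TYPE('u) Ss (fill Cx ?skB) \<longrightarrow> entails ops imp TYPE('u) Ss (fill Cx B))"
    using seq Fsub ent by blast
  have P3: "\<forall>Ss Fs (A :: ('c, 'p, 'f) fm). skax_seq ?W Ss Fs \<and> (\<forall>fs \<in> set Fs. set fs \<inter> funs A = {}) \<and>
          entails ops imp TYPE('u) Ss A \<longrightarrow> valid ops imp TYPE('u) A"
    using part3[OF lat] by blast
  show ?thesis using P1 P2 P3 by blast
qed


end
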